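(* Let $F\colon\mathbf{Ring}^{\mathrm{op}}\to\mathbf{Loc}$ be any functor whose restriction to commutative rings is naturally isomorphic to the Pierce spectrum functor. Then $F(R)$ is the trivial locale for every Kochen--Specker ring $R$; in particular $F(M_n(\mathbb{C}))$ is trivial for all $n\ge 3$.
   Context: $\mathbf{Ring}$ is the category of unital rings and unital ring homomorphisms; $\mathbf{Loc}$ is the category of locales. The Pierce spectrum of a commutative ring $R$ is the Stone spectrum of its boolean algebra $E(R)$ of idempotents, i.e. the locale whose frame is the ideal frame $\mathrm{Idl}(E(R))$. A locale is trivial if its frame satisfies $0=1$. A ring $R$ is Kochen--Specker if there is a ring homomorphism $M_n(\mathbb{C})\to R$ for some $n\ge 3$, where $M_n(\mathbb{C})$ is the ring of $n\times n$ complex matrices. *)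

theory Defs
  imports "HOL-Algebra.QuotRing" "Jordan_Normal_Form.Matrix"
begin

section \<open>Frames (locales are represented by their frames of opens)\<close>

record 'b frame_str =
  fcarrier :: "'b set"
  fle :: "'b \<Rightarrow> 'b \<Rightarrow> bool"

definition is_lub :: "'b frame_str \<Rightarrow> 'b set \<Rightarrow> 'b \<Rightarrow> bool" where
  "is_lub L A x \<longleftrightarrow> x \<in> fcarrier L \<and> (\<forall>a\<in>A. fle L a x)
     \<and> (\<forall>y\<in>fcarrier L. (\<forall>a\<in>A. fle L a y) \<longrightarrow> fle L x y)"

definition is_glb :: "'b frame_str \<Rightarrow> 'b set \<Rightarrow> 'b \<Rightarrow> bool" where
  "is_glb L A x \<longleftrightarrow> x \<in> fcarrier L \<and> (\<forall>a\<in>A. fle L x a)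
     \<and> (\<forall>y\<in>fcarrier L. (\<forall>a\<in>A. fle L y a) \<longrightarrow> fle L y x)"

definition fsup :: "'b frame_str \<Rightarrow> 'b set \<Rightarrow> 'b" where
  "fsup L A = (THE x. is_lub L A x)"

definition finf :: "'b frame_str \<Rightarrow> 'b \<Rightarrow> 'b \<Rightarrow> 'b" where
  "finf L a b = (THE x. is_glb L {a, b} x)"

definition ftop :: "'b frame_str \<Rightarrow> 'b" where
  "ftop L = fsup L (fcarrier L)"

definition fbot :: "'b frame_str \<Rightarrow> 'b" where
  "fbot L = fsup L {}"

definition is_frame :: "'b frame_str \<Rightarrow> bool" where
  "is_frame L \<longleftrightarrow>
     (\<forall>x\<in>fcarrier L. fle L x x)
   \<and> (\<forall>x\<in>fcarrier L. \<forall>y\<in>fcarrier L. fle L x y \<and> fle L y x \<longrightarrow> x = y)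
   \<and> (\<forall>x\<in>fcarrier L. \<forall>y\<in>fcarrier L. \<forall>z\<in>fcarrier L. fle L x y \<and> fle L y z \<longrightarrow> fle L x z)
   \<and> (\<forall>A. A \<subseteq> fcarrier L \<longrightarrow> (\<exists>x. is_lub L A x))
   \<and> (\<forall>a\<in>fcarrier L. \<forall>b\<in>fcarrier L. \<exists>x. is_glb L {a, b} x)
   \<and> (\<forall>a\<in>fcarrier L. \<forall>A. A \<subseteq> fcarrier L \<longrightarrow>
        finf L a (fsup L A) = fsup L ((\<lambda>s. finf L a s) ` A))"

text \<open>Frame homomorphisms: preserve arbitrary joins and finite meets.  A locale map
  \<open>X \<rightarrow> Y\<close> is a frame homomorphism \<open>O(Y) \<rightarrow> O(X)\<close>.\<close>
definition frame_hom :: "'b frame_str \<Rightarrow> 'c frame_str \<Rightarrow> ('b \<Rightarrow> 'c) \<Rightarrow> bool" where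
  "frame_hom L M f \<longleftrightarrow>
     (\<forall>x\<in>fcarrier L. f x \<in> fcarrier M)
   \<and> (\<forall>A. A \<subseteq> fcarrier L \<longrightarrow> f (fsup L A) = fsup M (f ` A))
   \<and> (\<forall>a\<in>fcarrier L. \<forall>b\<in>fcarrier L. f (finf L a b) = finf M (f a) (f b))
   \<and> f (ftop L) = ftop M"

definition frame_iso :: "'b frame_str \<Rightarrow> 'c frame_str \<Rightarrow> ('b \<Rightarrow> 'c) \<Rightarrow> bool" where
  "frame_iso L M f \<longleftrightarrow> frame_hom L M f \<and> bij_betw f (fcarrier L) (fcarrier M)"

definition trivial_frame :: "'b frame_str \<Rightarrow> bool" where
  "trivial_frame L \<longleftrightarrow> fbot L = ftop L"

text \<open>Morphisms are unital ring homomorphisms, taken extensional (undefined off the carrier)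
  so that they are determined by their values on the carrier.\<close>
definition ring_mor :: "'a ring \<Rightarrow> 'a ring \<Rightarrow> ('a \<Rightarrow> 'a) \<Rightarrow> bool" where
  "ring_mor R S h \<longleftrightarrow> h \<in> Ring.ring_hom R S \<and> h \<in> extensional (carrier R)"

text \<open>A functor \<open>Ring^op \<rightarrow> Loc\<close>, i.e. a covariant functor \<open>Ring \<rightarrow> Frm\<close>:
  object part \<open>Fo\<close>, morphism part \<open>Fm R S h\<close> for \<open>h : R \<rightarrow> S\<close>.\<close>
definition ring_loc_functor ::
  "('a ring \<Rightarrow> 'b frame_str) \<Rightarrow> ('a ring \<Rightarrow> 'a ring \<Rightarrow> ('a \<Rightarrow> 'a) \<Rightarrow> 'b \<Rightarrow> 'b) \<Rightarrow> bool" where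
  "ring_loc_functor Fo Fm \<longleftrightarrow>
     (\<forall>R. ring R \<longrightarrow> is_frame (Fo R))
   \<and> (\<forall>R S h. ring R \<and> ring S \<and> ring_mor R S h \<longrightarrow> frame_hom (Fo R) (Fo S) (Fm R S h))
   \<and> (\<forall>R. ring R \<longrightarrow> (\<forall>x\<in>fcarrier (Fo R). Fm R R (restrict id (carrier R)) x = x))
   \<and> (\<forall>R S T f g. ring R \<and> ring S \<and> ring T \<and> ring_mor R S f \<and> ring_mor S T g \<longrightarrow>
        (\<forall>x\<in>fcarrier (Fo R). Fm R T (compose (carrier R) g f) x = Fm S T g (Fm R S f x)))"

definition idempotents :: "('a, 'm) ring_scheme \<Rightarrow> 'a set" where
  "idempotents R = {e \<in> carrier R. e \<otimes>\<^bsub>R\<^esub> e = e}"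

text \<open>Ideals of the boolean algebra \<open>E(R)\<close> (order \<open>f \<le> e \<longleftrightarrow> f e = f\<close>,
  join \<open>e \<or> f = e + f - e f\<close>).\<close>
definition bool_ideal :: "('a, 'm) ring_scheme \<Rightarrow> 'a set \<Rightarrow> bool" where
  "bool_ideal R I \<longleftrightarrow> I \<subseteq> idempotents R \<and> \<zero>\<^bsub>R\<^esub> \<in> I
     \<and> (\<forall>e\<in>I. \<forall>f\<in>I. e \<oplus>\<^bsub>R\<^esub> f \<oplus>\<^bsub>R\<^esub> (\<ominus>\<^bsub>R\<^esub> (e \<otimes>\<^bsub>R\<^esub> f)) \<in> I)
     \<and> (\<forall>e\<in>I. \<forall>f\<in>idempotents R. f \<otimes>\<^bsub>R\<^esub> e = f \<longrightarrow> f \<in> I)"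

definition pierce_frame :: "('a, 'm) ring_scheme \<Rightarrow> 'a set frame_str" where
  "pierce_frame R = \<lparr>fcarrier = {I. bool_ideal R I}, fle = (\<subseteq>)\<rparr>"

text \<open>Action on morphisms: \<open>h : R \<rightarrow> S\<close> induces the frame map \<open>Idl(E R) \<rightarrow> Idl(E S)\<close>
  sending an ideal to the ideal generated by its image.\<close>
definition pierce_map :: "'a ring \<Rightarrow> 'a ring \<Rightarrow> ('a \<Rightarrow> 'a) \<Rightarrow> 'a set \<Rightarrow> 'a set" where
  "pierce_map R S h I = {f \<in> idempotents S. \<exists>e\<in>I. f \<otimes>\<^bsub>S\<^esub> h e = f}"

definition restricts_to_pierce ::
  "('a ring \<Rightarrow> 'b frame_str) \<Rightarrow> ('a ring \<Rightarrow> 'a ring \<Rightarrow> ('a \<Rightarrow> 'a) \<Rightarrow> 'b \<Rightarrow> 'b) \<Rightarrow> bool" where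
  "restricts_to_pierce Fo Fm \<longleftrightarrow>
    (\<exists>\<eta> :: 'a ring \<Rightarrow> 'b \<Rightarrow> 'a set.
       (\<forall>R. cring R \<longrightarrow> frame_iso (Fo R) (pierce_frame R) (\<eta> R))
     \<and> (\<forall>R S h. cring R \<and> cring S \<and> ring_mor R S h \<longrightarrow>
          (\<forall>x\<in>fcarrier (Fo R). \<eta> S (Fm R S h x) = pierce_map R S h (\<eta> R x))))"

abbreviation cmat_ring :: "nat \<Rightarrow> complex mat ring" where
  "cmat_ring n \<equiv> ring_mat TYPE(complex) n ()"

definition kochen_specker :: "('a, 'm) ring_scheme \<Rightarrow> bool" where
  "kochen_specker R \<longleftrightarrow> (\<exists>n\<ge>3. \<exists>\<phi>. \<phi> \<in> Ring.ring_hom (cmat_ring n) R)"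

end

theory Submission
  imports Defs "HOL-Algebra.Subrings"
begin


section \<open>Frame lemmas\<close>

lemma lub_unique:
  assumes "\<forall>x\<in>fcarrier L. \<forall>y\<in>fcarrier L. fle L x y \<and> fle L y x \<longrightarrow> x = y"
    and "is_lub L A x" "is_lub L A y" shows "x = y"
  using assms unfolding is_lub_def by blast

lemma glb_unique:
  assumes "\<forall>x\<in>fcarrier L. \<forall>y\<in>fcarrier L. fle L x y \<and> fle L y x \<longrightarrow> x = y"
    and "is_glb L A x" "is_glb L A y" shows "x = y"
  using assms unfolding is_glb_def by blast

lemma fsup_eqI:
  assumes "\<forall>x\<in>fcarrier L. \<forall>y\<in>fcarrier L. fle L x y \<and> fle L y x \<longrightarrow> x = y"
    and "is_lub L A x" shows "fsup L A = x"
  unfolding fsup_def using lub_unique[OF assms(1)] assms(2) by blast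

lemma finf_eqI:
  assumes "\<forall>x\<in>fcarrier L. \<forall>y\<in>fcarrier L. fle L x y \<and> fle L y x \<longrightarrow> x = y"
    and "is_glb L {a,b} x" shows "finf L a b = x"
  unfolding finf_def using glb_unique[OF assms(1)] assms(2) by blast

context fixes L :: "'b frame_str" assumes fr: "is_frame L"
begin

lemmas frd = fr[unfolded is_frame_def]
lemmas fr_refl_all = conjunct1[OF frd]
lemmas fr_antisym = conjunct1[OF conjunct2[OF frd]]
lemmas fr_trans_all = conjunct1[OF conjunct2[OF conjunct2[OF frd]]]
lemmas fr_lub_ex = conjunct1[OF conjunct2[OF conjunct2[OF conjunct2[OF frd]]]]
lemmas fr_glb_ex = conjunct1[OF conjunct2[OF conjunct2[OF conjunct2[OF conjunct2[OF frd]]]]]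
lemmas fr_distrib_all = conjunct2[OF conjunct2[OF conjunct2[OF conjunct2[OF conjunct2[OF frd]]]]]

lemma fr_anti: "x \<in> fcarrier L \<Longrightarrow> y \<in> fcarrier L \<Longrightarrow> fle L x y \<Longrightarrow> fle L y x \<Longrightarrow> x = y"
  using fr_antisym by blast

lemma fr_refl: "x \<in> fcarrier L \<Longrightarrow> fle L x x"
  using fr_refl_all by blast

lemma fr_trans: "x \<in> fcarrier L \<Longrightarrow> y \<in> fcarrier L \<Longrightarrow> z \<in> fcarrier L \<Longrightarrow> fle L x y \<Longrightarrow> fle L y z \<Longrightarrow> fle L x z"
  using fr_trans_all by blast

lemma fr_lub: "A \<subseteq> fcarrier L \<Longrightarrow> is_lub L A (fsup L A)"
proof -
  assume "A \<subseteq> fcarrier L"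
  then obtain x where "is_lub L A x" using fr_lub_ex by blast
  thus ?thesis using fsup_eqI[OF fr_antisym] by simp
qed

lemma fr_glb: "a \<in> fcarrier L \<Longrightarrow> b \<in> fcarrier L \<Longrightarrow> is_glb L {a,b} (finf L a b)"
proof -
  assume "a \<in> fcarrier L" "b \<in> fcarrier L"
  then obtain x where "is_glb L {a,b} x" using fr_glb_ex by blast
  thus ?thesis using finf_eqI[OF fr_antisym] by simp
qed

lemma fsup_in: "A \<subseteq> fcarrier L \<Longrightarrow> fsup L A \<in> fcarrier L"
  using fr_lub unfolding is_lub_def by blast

lemma finf_in: "a \<in> fcarrier L \<Longrightarrow> b \<in> fcarrier L \<Longrightarrow> finf L a b \<in> fcarrier L"
  using fr_glb unfolding is_glb_def by blast

lemma finf_le1: "a \<in> fcarrier L \<Longrightarrow> b \<in> fcarrier L \<Longrightarrow> fle L (finf L a b) a"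
  using fr_glb unfolding is_glb_def by blast

lemma finf_le2: "a \<in> fcarrier L \<Longrightarrow> b \<in> fcarrier L \<Longrightarrow> fle L (finf L a b) b"
  using fr_glb unfolding is_glb_def by blast

lemma le_finf: "a \<in> fcarrier L \<Longrightarrow> b \<in> fcarrier L \<Longrightarrow> z \<in> fcarrier L \<Longrightarrow> fle L z a \<Longrightarrow> fle L z b
   \<Longrightarrow> fle L z (finf L a b)"
  using fr_glb[of a b] unfolding is_glb_def by blast

lemma fbot_in: "fbot L \<in> fcarrier L"
  unfolding fbot_def by (rule fsup_in) simp

lemma fbot_le: "x \<in> fcarrier L \<Longrightarrow> fle L (fbot L) x"
  using fr_lub[of "{}"] unfolding fbot_def is_lub_def by simp

lemma ftop_in: "ftop L \<in> fcarrier L"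
  unfolding ftop_def by (rule fsup_in) simp

lemma le_ftop: "x \<in> fcarrier L \<Longrightarrow> fle L x (ftop L)"
  using fr_lub[of "fcarrier L"] unfolding ftop_def is_lub_def by simp

lemma le_bot: "x \<in> fcarrier L \<Longrightarrow> fle L x (fbot L) \<Longrightarrow> x = fbot L"
  by (rule fr_anti[OF _ fbot_in _ fbot_le])

lemma finf_top: "c \<in> fcarrier L \<Longrightarrow> finf L c (ftop L) = c"
  apply (rule finf_eqI[OF fr_antisym])
  unfolding is_glb_def using fr_refl le_ftop by auto

lemma fsup_bot2: "x \<in> fcarrier L \<Longrightarrow> fsup L {x, fbot L} = x"
  apply (rule fsup_eqI[OF fr_antisym])
  unfolding is_lub_def using fr_refl fbot_le fbot_in by auto

lemma fsup_bot1: "fsup L {fbot L} = fbot L"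
  using fsup_bot2[OF fbot_in] by simp

lemma fr_distrib: "a \<in> fcarrier L \<Longrightarrow> A \<subseteq> fcarrier L \<Longrightarrow>
        finf L a (fsup L A) = fsup L ((\<lambda>s. finf L a s) ` A)"
  using fr_distrib_all by blast

lemma fr_split:
  assumes c: "c \<in> fcarrier L" and x: "x \<in> fcarrier L" and y: "y \<in> fcarrier L"
    and top: "fsup L {x,y} = ftop L" and cb: "c \<noteq> fbot L"
  shows "finf L c x \<noteq> fbot L \<or> finf L c y \<noteq> fbot L"
proof (rule ccontr)
  assume "\<not> ?thesis"
  hence h: "finf L c x = fbot L" "finf L c y = fbot L" by auto
  have "finf L c (fsup L {x,y}) = fsup L ((\<lambda>s. finf L c s) ` {x,y})"
    using fr_distrib c x y by simp
  also have "\<dots> = fbot L" using h fsup_bot1 by simp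
  finally show False using top finf_top c cb by simp
qed

lemma atoms_exist:
  assumes "set ps \<subseteq> {(x,y). x \<in> fcarrier L \<and> y \<in> fcarrier L \<and> fsup L {x,y} = ftop L}"
    and "c \<in> fcarrier L" "c \<noteq> fbot L"
  shows "\<exists>A \<in> fcarrier L. A \<noteq> fbot L \<and> fle L A c \<and> (\<forall>(x,y)\<in>set ps. fle L A x \<or> fle L A y)"
  using assms
proof (induction ps arbitrary: c)
  case Nil thus ?case using fr_refl by auto
next
  case (Cons p ps)
  obtain x y where p: "p = (x,y)" by fastforce
  have xy: "x \<in> fcarrier L" "y \<in> fcarrier L" "fsup L {x,y} = ftop L" using Cons.prems p by auto
  from fr_split[OF Cons.prems(2) xy Cons.prems(3)]
  obtain z where z: "z \<in> {x,y}" "finf L c z \<noteq> fbot L" by blast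
  have zc: "z \<in> fcarrier L" using z xy by auto
  obtain A where A: "A \<in> fcarrier L" "A \<noteq> fbot L" "fle L A (finf L c z)"
    "\<forall>(x,y)\<in>set ps. fle L A x \<or> fle L A y"
    using Cons.IH[of "finf L c z"] Cons.prems z finf_in[OF Cons.prems(2) zc] by auto
  have "fle L A c" using fr_trans[OF A(1) finf_in[OF Cons.prems(2) zc] Cons.prems(2) A(3)]
      finf_le1[OF Cons.prems(2) zc] by blast
  moreover have "fle L A z" using fr_trans[OF A(1) finf_in[OF Cons.prems(2) zc] zc A(3)]
      finf_le2[OF Cons.prems(2) zc] by blast
  ultimately show ?case using A z p by auto
qed

end


section \<open>Pierce frame facts\<close>

definition dn :: "('a, 'm) ring_scheme \<Rightarrow> 'a \<Rightarrow> 'a set" where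
  "dn R e = {f \<in> idempotents R. f \<otimes>\<^bsub>R\<^esub> e = f}"

context cring begin

lemma idem_join:
  assumes "f \<in> carrier R" "g \<in> carrier R" "f \<otimes> f = f" "g \<otimes> g = g"
  shows "(f \<oplus> g \<oplus> \<ominus> (f \<otimes> g)) \<otimes> (f \<oplus> g \<oplus> \<ominus> (f \<otimes> g)) = f \<oplus> g \<oplus> \<ominus> (f \<otimes> g)"
  using assms apply algebra apply (simp add: m_assoc[symmetric]) done

lemma idem_mult:
  assumes "f \<in> carrier R" "g \<in> carrier R" "f \<otimes> f = f" "g \<otimes> g = g"
  shows "(f \<otimes> g) \<otimes> (f \<otimes> g) = f \<otimes> g"
proof -
  have "(f \<otimes> g) \<otimes> (f \<otimes> g) = (f \<otimes> f) \<otimes> (g \<otimes> g)" using assms(1,2) by algebra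
  thus ?thesis by (simp only: assms(3,4))
qed

lemma join_le:
  assumes "f \<in> carrier R" "g \<in> carrier R" "e \<in> carrier R" "f \<otimes> e = f" "g \<otimes> e = g"
  shows "(f \<oplus> g \<oplus> \<ominus> (f \<otimes> g)) \<otimes> e = f \<oplus> g \<oplus> \<ominus> (f \<otimes> g)"
proof -
  have "(f \<oplus> g \<oplus> \<ominus> (f \<otimes> g)) \<otimes> e = f \<otimes> e \<oplus> g \<otimes> e \<oplus> \<ominus> (f \<otimes> (g \<otimes> e))" using assms(1,2,3) by algebra
  thus ?thesis by (simp only: assms(4,5))
qed

lemma idem_carrier: "idempotents R \<subseteq> carrier R" unfolding idempotents_def by auto

lemma dn_ideal:
  assumes e: "e \<in> idempotents R" shows "bool_ideal R (dn R e)"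
  unfolding bool_ideal_def
proof (intro conjI ballI impI)
  show "dn R e \<subseteq> idempotents R" unfolding dn_def by auto
  show "\<zero> \<in> dn R e" using e unfolding dn_def idempotents_def by auto
next
  fix x y assume x: "x \<in> dn R e" and y: "y \<in> dn R e"
  hence xc: "x \<in> carrier R" "x \<otimes> x = x" "x \<otimes> e = x" and yc: "y \<in> carrier R" "y \<otimes> y = y" "y \<otimes> e = y"
    unfolding dn_def idempotents_def by auto
  show "x \<oplus> y \<oplus> \<ominus> (x \<otimes> y) \<in> dn R e"
    unfolding dn_def idempotents_def
    using idem_join[OF xc(1) yc(1) xc(2) yc(2)] join_le[OF xc(1) yc(1) _ xc(3) yc(3)] e xc yc
    unfolding idempotents_def by auto
next
  fix x f assume x: "x \<in> dn R e" and f: "f \<in> idempotents R" and fx: "f \<otimes> x = f"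
  have "f \<otimes> e = f \<otimes> x \<otimes> e" using fx by simp
  also have "\<dots> = f \<otimes> (x \<otimes> e)" using x f e unfolding dn_def idempotents_def by (simp add: m_assoc)
  also have "\<dots> = f" using x fx unfolding dn_def by simp
  finally show "f \<in> dn R e" using f unfolding dn_def by simp
qed

lemma E_ideal: "bool_ideal R (idempotents R)"
  unfolding bool_ideal_def
proof (intro conjI ballI impI)
  show "\<zero> \<in> idempotents R" unfolding idempotents_def by auto
next
  fix x y assume "x \<in> idempotents R" "y \<in> idempotents R"
  thus "x \<oplus> y \<oplus> \<ominus> (x \<otimes> y) \<in> idempotents R"
    using idem_join unfolding idempotents_def by auto
qed auto

lemma dn_one: "dn R \<one> = idempotents R"
  unfolding dn_def idempotents_def by auto

lemma dn_zero: "dn R \<zero> = {\<zero>}"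
  unfolding dn_def idempotents_def by auto

lemma pierce_antisym: "\<forall>x\<in>fcarrier (pierce_frame R). \<forall>y\<in>fcarrier (pierce_frame R).
   fle (pierce_frame R) x y \<and> fle (pierce_frame R) y x \<longrightarrow> x = y"
  unfolding pierce_frame_def by auto

lemma ideal_zero: "bool_ideal R I \<Longrightarrow> \<zero> \<in> I" unfolding bool_ideal_def by auto
lemma ideal_sub: "bool_ideal R I \<Longrightarrow> I \<subseteq> idempotents R" unfolding bool_ideal_def by auto

lemma pierce_bot: "fbot (pierce_frame R) = dn R \<zero>"
  unfolding fbot_def
  apply (rule fsup_eqI[OF pierce_antisym])
  unfolding is_lub_def using dn_ideal[of \<zero>] ideal_zero
  by (auto simp: dn_zero pierce_frame_def idempotents_def)

lemma pierce_top: "ftop (pierce_frame R) = idempotents R"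
  unfolding ftop_def
  apply (rule fsup_eqI[OF pierce_antisym])
  unfolding is_lub_def using E_ideal ideal_sub
  by (auto simp: pierce_frame_def)

lemma dn_inter:
  assumes e: "e \<in> idempotents R" and f: "f \<in> idempotents R"
  shows "dn R (e \<otimes> f) = dn R e \<inter> dn R f"
proof -
  have ec: "e \<in> carrier R" "e \<otimes> e = e" and fc: "f \<in> carrier R" "f \<otimes> f = f"
    using e f unfolding idempotents_def by auto
  show ?thesis
  proof (intro equalityI subsetI)
    fix g assume g: "g \<in> dn R (e \<otimes> f)"
    hence gc: "g \<in> carrier R" "g \<otimes> (e \<otimes> f) = g" unfolding dn_def idempotents_def by auto
    have "g \<otimes> e = g \<otimes> (e \<otimes> f) \<otimes> e" using gc by simp
    also have "\<dots> = g \<otimes> ((e \<otimes> e) \<otimes> f)" using gc(1) ec(1) fc(1) by algebra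
    also have "\<dots> = g" using gc ec by simp
    finally have 1: "g \<otimes> e = g" .
    have "g \<otimes> f = g \<otimes> (e \<otimes> f) \<otimes> f" using gc by simp
    also have "\<dots> = g \<otimes> (e \<otimes> (f \<otimes> f))" using gc(1) ec(1) fc(1) by algebra
    also have "\<dots> = g" using gc fc by simp
    finally have 2: "g \<otimes> f = g" .
    show "g \<in> dn R e \<inter> dn R f" using g 1 2 unfolding dn_def by auto
  next
    fix g assume g: "g \<in> dn R e \<inter> dn R f"
    hence gc: "g \<in> carrier R" "g \<otimes> e = g" "g \<otimes> f = g" unfolding dn_def idempotents_def by auto
    have "g \<otimes> (e \<otimes> f) = (g \<otimes> e) \<otimes> f" using gc(1) ec(1) fc(1) by algebra
    also have "\<dots> = g" using gc by simp
    finally show "g \<in> dn R (e \<otimes> f)" using g unfolding dn_def by auto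
  qed
qed

lemma pierce_inf:
  assumes e: "e \<in> idempotents R" and f: "f \<in> idempotents R"
  shows "finf (pierce_frame R) (dn R e) (dn R f) = dn R (e \<otimes> f)"
proof -
  have ef: "e \<otimes> f \<in> idempotents R" using e f idem_mult unfolding idempotents_def by auto
  show ?thesis
    apply (rule finf_eqI[OF pierce_antisym])
    unfolding is_glb_def dn_inter[OF e f] using dn_ideal[OF ef] dn_inter[OF e f]
    by (auto simp: pierce_frame_def)
qed

lemma pierce_sup_compl:
  assumes e: "e \<in> idempotents R"
  shows "fsup (pierce_frame R) {dn R e, dn R (\<one> \<ominus> e)} = idempotents R"
proof -
  have ec: "e \<in> carrier R" "e \<otimes> e = e" using e unfolding idempotents_def by auto
  have ce: "\<one> \<ominus> e \<in> carrier R" using ec by simp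
  have "(\<one> \<ominus> e) \<otimes> (\<one> \<ominus> e) = \<one> \<ominus> e \<ominus> e \<oplus> e \<otimes> e" using ec(1) by algebra
  also have "\<dots> = \<one> \<ominus> e \<ominus> e \<oplus> e" by (simp only: ec(2))
  also have "\<dots> = \<one> \<ominus> e" using ec(1) by algebra
  finally have cei: "(\<one> \<ominus> e) \<otimes> (\<one> \<ominus> e) = \<one> \<ominus> e" .
  have "e \<otimes> (\<one> \<ominus> e) = e \<ominus> e \<otimes> e" using ec(1) by algebra
  also have "\<dots> = e \<ominus> e" by (simp only: ec(2))
  also have "\<dots> = \<zero>" using ec(1) by algebra
  finally have prod0: "e \<otimes> (\<one> \<ominus> e) = \<zero>" .
  have "e \<oplus> (\<one> \<ominus> e) \<oplus> \<ominus> (e \<otimes> (\<one> \<ominus> e)) = e \<oplus> (\<one> \<ominus> e) \<oplus> \<ominus> \<zero>" by (simp only: prod0)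
  also have "\<dots> = \<one>" using ec(1) by algebra
  finally have join: "e \<oplus> (\<one> \<ominus> e) \<oplus> \<ominus> (e \<otimes> (\<one> \<ominus> e)) = \<one>" .
  have ei: "e \<in> dn R e" using e ec unfolding dn_def by auto
  have cei2: "\<one> \<ominus> e \<in> dn R (\<one> \<ominus> e)" using cei ce unfolding dn_def idempotents_def by auto
  show ?thesis
    apply (rule fsup_eqI[OF pierce_antisym])
    unfolding is_lub_def
  proof (intro conjI ballI impI)
    show "idempotents R \<in> fcarrier (pierce_frame R)" using E_ideal by (simp add: pierce_frame_def)
    fix a assume "a \<in> {dn R e, dn R (\<one> \<ominus> e)}"
    thus "fle (pierce_frame R) a (idempotents R)" unfolding pierce_frame_def dn_def by auto
  next
    fix y assume y: "y \<in> fcarrier (pierce_frame R)" and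
      up: "\<forall>a\<in>{dn R e, dn R (\<one> \<ominus> e)}. fle (pierce_frame R) a y"
    have yi: "bool_ideal R y" using y by (simp add: pierce_frame_def)
    have "e \<in> y" "\<one> \<ominus> e \<in> y" using up ei cei2 by (auto simp: pierce_frame_def)
    hence "\<one> \<in> y" using yi join unfolding bool_ideal_def by metis
    hence "idempotents R \<subseteq> y" using yi unfolding bool_ideal_def idempotents_def by auto
    thus "fle (pierce_frame R) (idempotents R) y" by (simp add: pierce_frame_def)
  qed
qed

end


section \<open>Commutants and commutative subrings\<close>

definition comm :: "('a,'m) ring_scheme \<Rightarrow> 'a set \<Rightarrow> 'a set" where
  "comm R S = {x \<in> carrier R. \<forall>s\<in>S. x \<otimes>\<^bsub>R\<^esub> s = s \<otimes>\<^bsub>R\<^esub> x}"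

definition dc :: "('a,'m) ring_scheme \<Rightarrow> 'a set \<Rightarrow> 'a set" where
  "dc R S = comm R (comm R S)"

definition sub :: "('a,'m) ring_scheme \<Rightarrow> 'a set \<Rightarrow> ('a,'m) ring_scheme" where
  "sub R S = R\<lparr>carrier := dc R S\<rparr>"

definition commuting :: "('a,'m) ring_scheme \<Rightarrow> 'a set \<Rightarrow> bool" where
  "commuting R S \<longleftrightarrow> S \<subseteq> carrier R \<and> (\<forall>x\<in>S. \<forall>y\<in>S. x \<otimes>\<^bsub>R\<^esub> y = y \<otimes>\<^bsub>R\<^esub> x)"

context ring begin

lemma comm_sub: "S \<subseteq> carrier R \<Longrightarrow> subring (comm R S) R"
proof (rule subringI)
  assume S: "S \<subseteq> carrier R"
  show "comm R S \<subseteq> carrier R" unfolding comm_def by auto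
  show "\<one> \<in> comm R S" using S unfolding comm_def by auto
  fix h assume h: "h \<in> comm R S"
  show "\<ominus> h \<in> comm R S" unfolding comm_def
  proof (intro CollectI conjI ballI)
    show "\<ominus> h \<in> carrier R" using h unfolding comm_def by auto
    fix s assume s: "s \<in> S"
    hence sc: "s \<in> carrier R" using S by auto
    have hc: "h \<in> carrier R" "h \<otimes> s = s \<otimes> h" using h s unfolding comm_def by auto
    have "\<ominus> h \<otimes> s = \<ominus> (h \<otimes> s)" using hc sc by (simp add: l_minus)
    also have "\<dots> = \<ominus> (s \<otimes> h)" using hc by simp
    also have "\<dots> = s \<otimes> \<ominus> h" using hc sc by (simp add: r_minus)
    finally show "\<ominus> h \<otimes> s = s \<otimes> \<ominus> h" .
  qed
next
  assume S: "S \<subseteq> carrier R"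
  fix h1 h2 assume h1: "h1 \<in> comm R S" and h2: "h2 \<in> comm R S"
  have c: "h1 \<in> carrier R" "h2 \<in> carrier R" using h1 h2 unfolding comm_def by auto
  show "h1 \<otimes> h2 \<in> comm R S" unfolding comm_def
  proof (intro CollectI conjI ballI)
    show "h1 \<otimes> h2 \<in> carrier R" using c by simp
    fix s assume s: "s \<in> S"
    hence sc: "s \<in> carrier R" using S by auto
    have e1: "h1 \<otimes> s = s \<otimes> h1" and e2: "h2 \<otimes> s = s \<otimes> h2" using h1 h2 s unfolding comm_def by auto
    have "h1 \<otimes> h2 \<otimes> s = h1 \<otimes> (h2 \<otimes> s)" using c sc by (simp add: m_assoc)
    also have "\<dots> = h1 \<otimes> (s \<otimes> h2)" using e2 by simp
    also have "\<dots> = (h1 \<otimes> s) \<otimes> h2" using c sc by (simp add: m_assoc)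
    also have "\<dots> = (s \<otimes> h1) \<otimes> h2" using e1 by simp
    also have "\<dots> = s \<otimes> (h1 \<otimes> h2)" using c sc by (simp add: m_assoc)
    finally show "h1 \<otimes> h2 \<otimes> s = s \<otimes> (h1 \<otimes> h2)" .
  qed
  show "h1 \<oplus> h2 \<in> comm R S" unfolding comm_def
  proof (intro CollectI conjI ballI)
    show "h1 \<oplus> h2 \<in> carrier R" using c by simp
    fix s assume s: "s \<in> S"
    hence sc: "s \<in> carrier R" using S by auto
    have e1: "h1 \<otimes> s = s \<otimes> h1" and e2: "h2 \<otimes> s = s \<otimes> h2" using h1 h2 s unfolding comm_def by auto
    show "(h1 \<oplus> h2) \<otimes> s = s \<otimes> (h1 \<oplus> h2)" using c sc e1 e2 by (simp add: l_distr r_distr)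
  qed
qed

lemma comm_carrier: "comm R S \<subseteq> carrier R" unfolding comm_def by auto

lemma S_comm: "commuting R S \<Longrightarrow> S \<subseteq> comm R S"
  unfolding commuting_def comm_def by auto

lemma comm_anti: "S \<subseteq> S' \<Longrightarrow> comm R S' \<subseteq> comm R S"
  unfolding comm_def by auto

lemma dc_comm: "commuting R S \<Longrightarrow> dc R S \<subseteq> comm R S"
proof
  fix x assume cS: "commuting R S" and x: "x \<in> dc R S"
  have "\<forall>s\<in>S. x \<otimes> s = s \<otimes> x"
  proof
    fix s assume "s \<in> S"
    hence "s \<in> comm R S" using S_comm[OF cS] by auto
    thus "x \<otimes> s = s \<otimes> x" using x unfolding dc_def comm_def by auto
  qed
  thus "x \<in> comm R S" using x unfolding dc_def comm_def by auto
qed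

lemma S_dc: "commuting R S \<Longrightarrow> S \<subseteq> dc R S"
  unfolding dc_def commuting_def comm_def by auto

lemma dc_mono: "S \<subseteq> S' \<Longrightarrow> dc R S \<subseteq> dc R S'"
  unfolding dc_def using comm_anti by (meson comm_anti)

lemma dc_carrier: "dc R S \<subseteq> carrier R" unfolding dc_def comm_def by auto

lemma dc_subcring: "commuting R S \<Longrightarrow> subcring (dc R S) R"
proof (rule subcringI)
  assume "commuting R S"
  show "subring (dc R S) R" unfolding dc_def by (rule comm_sub[OF comm_carrier])
  fix h1 h2 assume "h1 \<in> dc R S" "h2 \<in> dc R S"
  moreover have "h2 \<in> comm R S" using \<open>h2 \<in> dc R S\<close> dc_comm[OF \<open>commuting R S\<close>] by auto
  ultimately show "h1 \<otimes> h2 = h2 \<otimes> h1" unfolding dc_def comm_def by auto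
qed

lemma cring_sub: "commuting R S \<Longrightarrow> cring (sub R S)"
  unfolding sub_def using subcring_iff[OF dc_carrier] dc_subcring by blast

lemma ring_sub: "commuting R S \<Longrightarrow> ring (sub R S)"
  using cring_sub cring.axioms(1) by blast


end

lemma incl_mor:
  fixes R :: "'a ring"
  assumes R: "ring R" and X: "subring X R" and "X \<subseteq> Y" "Y \<subseteq> carrier R"
  shows "ring_mor (R\<lparr>carrier := X\<rparr>) (R\<lparr>carrier := Y\<rparr>) (restrict id X)"
  unfolding ring_mor_def
proof
  show "restrict id X \<in> Ring.ring_hom (R\<lparr>carrier := X\<rparr>) (R\<lparr>carrier := Y\<rparr>)"
    apply (rule ring_hom_memI)
    using assms subringE[OF X] by auto
  show "restrict id X \<in> extensional (carrier (R\<lparr>carrier := X\<rparr>))" by simp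
qed


section \<open>Frame homomorphisms and isomorphisms\<close>

lemma fh_carrier: "frame_hom L M f \<Longrightarrow> x \<in> fcarrier L \<Longrightarrow> f x \<in> fcarrier M"
  unfolding frame_hom_def by blast
lemma fh_sup: "frame_hom L M f \<Longrightarrow> A \<subseteq> fcarrier L \<Longrightarrow> f (fsup L A) = fsup M (f ` A)"
  unfolding frame_hom_def by blast
lemma fh_inf: "frame_hom L M f \<Longrightarrow> a \<in> fcarrier L \<Longrightarrow> b \<in> fcarrier L \<Longrightarrow> f (finf L a b) = finf M (f a) (f b)"
  unfolding frame_hom_def by blast
lemma fh_top: "frame_hom L M f \<Longrightarrow> f (ftop L) = ftop M"
  unfolding frame_hom_def by blast
lemma fh_bot: "frame_hom L M f \<Longrightarrow> f (fbot L) = fbot M"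
  unfolding fbot_def using fh_sup[of L M f "{}"] by simp

lemma iso_inv_in: "frame_iso L M f \<Longrightarrow> I \<in> fcarrier M \<Longrightarrow> inv_into (fcarrier L) f I \<in> fcarrier L"
  unfolding frame_iso_def by (meson bij_betw_apply bij_betw_inv_into)
lemma iso_inv_right: "frame_iso L M f \<Longrightarrow> I \<in> fcarrier M \<Longrightarrow> f (inv_into (fcarrier L) f I) = I"
  unfolding frame_iso_def by (meson bij_betw_inv_into_right)
lemma iso_inv_eq: "frame_iso L M f \<Longrightarrow> x \<in> fcarrier L \<Longrightarrow> f x = I \<Longrightarrow> inv_into (fcarrier L) f I = x"
  unfolding frame_iso_def by (metis bij_betw_inv_into_left)

locale KSL =
  fixes Fo :: "'a ring \<Rightarrow> 'b frame_str"
    and Fm :: "'a ring \<Rightarrow> 'a ring \<Rightarrow> ('a \<Rightarrow> 'a) \<Rightarrow> 'b \<Rightarrow> 'b"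
    and \<eta> :: "'a ring \<Rightarrow> 'b \<Rightarrow> 'a set"
    and R :: "'a ring"
  assumes func: "ring_loc_functor Fo Fm"
    and eiso: "\<And>C. cring C \<Longrightarrow> frame_iso (Fo C) (pierce_frame C) (\<eta> C)"
    and enat: "\<And>C D h x. cring C \<Longrightarrow> cring D \<Longrightarrow> ring_mor C D h \<Longrightarrow> x \<in> fcarrier (Fo C)
        \<Longrightarrow> \<eta> D (Fm C D h x) = pierce_map C D h (\<eta> C x)"
    and ringR: "ring R"
begin

lemma frameFo: "ring C \<Longrightarrow> is_frame (Fo C)"
  using func unfolding ring_loc_functor_def by blast
lemma homFm: "ring C \<Longrightarrow> ring D \<Longrightarrow> ring_mor C D h \<Longrightarrow> frame_hom (Fo C) (Fo D) (Fm C D h)"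
  using func unfolding ring_loc_functor_def by blast
lemma compF: "ring C \<Longrightarrow> ring D \<Longrightarrow> ring T \<Longrightarrow> ring_mor C D f \<Longrightarrow> ring_mor D T g \<Longrightarrow>
  x \<in> fcarrier (Fo C) \<Longrightarrow> Fm C T (compose (carrier C) g f) x = Fm D T g (Fm C D f x)"
  using func unfolding ring_loc_functor_def by blast

definition gS :: "'a set \<Rightarrow> 'a set \<Rightarrow> 'b" where
  "gS S I = Fm (sub R S) R (restrict id (dc R S))
      (inv_into (fcarrier (Fo (sub R S))) (\<eta> (sub R S)) I)"

definition aS :: "'a set \<Rightarrow> 'a \<Rightarrow> 'b" where
  "aS S e = gS S (dn (sub R S) e)"

lemma frameR: "is_frame (Fo R)" using frameFo ringR by blast

lemma mor_sub: "commuting R S \<Longrightarrow> ring_mor (sub R S) R (restrict id (dc R S))"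
proof -
  assume cS: "commuting R S"
  have "ring_mor (R\<lparr>carrier := dc R S\<rparr>) (R\<lparr>carrier := carrier R\<rparr>) (restrict id (dc R S))"
    apply (rule incl_mor[OF ringR])
    using ring.dc_subcring[OF ringR cS] subcring.axioms(1) ring.dc_carrier[OF ringR] by auto
  thus ?thesis unfolding sub_def by simp
qed

lemma hom_sub: "commuting R S \<Longrightarrow> frame_hom (Fo (sub R S)) (Fo R) (Fm (sub R S) R (restrict id (dc R S)))"
  using homFm[OF ring.ring_sub[OF ringR] ringR mor_sub] by blast

lemma frame_sub: "commuting R S \<Longrightarrow> is_frame (Fo (sub R S))"
  using frameFo ring.ring_sub[OF ringR] by blast

lemma iso_sub: "commuting R S \<Longrightarrow> frame_iso (Fo (sub R S)) (pierce_frame (sub R S)) (\<eta> (sub R S))"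
  using eiso ring.cring_sub[OF ringR] by blast

lemma gS_in: "commuting R S \<Longrightarrow> I \<in> fcarrier (pierce_frame (sub R S)) \<Longrightarrow> gS S I \<in> fcarrier (Fo R)"
  unfolding gS_def using fh_carrier[OF hom_sub] iso_inv_in[OF iso_sub] by blast

lemma iso_hom: "frame_iso L M f \<Longrightarrow> frame_hom L M f" unfolding frame_iso_def by blast

lemma gS_bot: "commuting R S \<Longrightarrow> gS S (fbot (pierce_frame (sub R S))) = fbot (Fo R)"
proof -
  assume cS: "commuting R S"
  have "inv_into (fcarrier (Fo (sub R S))) (\<eta> (sub R S)) (fbot (pierce_frame (sub R S))) = fbot (Fo (sub R S))"
    by (rule iso_inv_eq[OF iso_sub[OF cS] fbot_in[OF frame_sub[OF cS]] fh_bot[OF iso_hom[OF iso_sub[OF cS]]]])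
  thus ?thesis unfolding gS_def using fh_bot[OF hom_sub[OF cS]] by simp
qed

lemma gS_top: "commuting R S \<Longrightarrow> gS S (ftop (pierce_frame (sub R S))) = ftop (Fo R)"
proof -
  assume cS: "commuting R S"
  have "inv_into (fcarrier (Fo (sub R S))) (\<eta> (sub R S)) (ftop (pierce_frame (sub R S))) = ftop (Fo (sub R S))"
    by (rule iso_inv_eq[OF iso_sub[OF cS] ftop_in[OF frame_sub[OF cS]] fh_top[OF iso_hom[OF iso_sub[OF cS]]]])
  thus ?thesis unfolding gS_def using fh_top[OF hom_sub[OF cS]] by simp
qed

lemma gS_inf:
  assumes cS: "commuting R S" and I: "I \<in> fcarrier (pierce_frame (sub R S))"
    and J: "J \<in> fcarrier (pierce_frame (sub R S))"
  shows "gS S (finf (pierce_frame (sub R S)) I J) = finf (Fo R) (gS S I) (gS S J)"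
proof -
  let ?i = "inv_into (fcarrier (Fo (sub R S))) (\<eta> (sub R S))"
  have xi: "?i I \<in> fcarrier (Fo (sub R S))" "?i J \<in> fcarrier (Fo (sub R S))"
    using iso_inv_in[OF iso_sub[OF cS]] I J by auto
  have "?i (finf (pierce_frame (sub R S)) I J) = finf (Fo (sub R S)) (?i I) (?i J)"
    apply (rule iso_inv_eq[OF iso_sub[OF cS] finf_in[OF frame_sub[OF cS] xi]])
    using fh_inf[OF iso_hom[OF iso_sub[OF cS]] xi] iso_inv_right[OF iso_sub[OF cS]] I J by simp
  thus ?thesis unfolding gS_def using fh_inf[OF hom_sub[OF cS] xi] by simp
qed

lemma gS_sup2:
  assumes cS: "commuting R S" and I: "I \<in> fcarrier (pierce_frame (sub R S))"
    and J: "J \<in> fcarrier (pierce_frame (sub R S))"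
  shows "gS S (fsup (pierce_frame (sub R S)) {I, J}) = fsup (Fo R) {gS S I, gS S J}"
proof -
  let ?i = "inv_into (fcarrier (Fo (sub R S))) (\<eta> (sub R S))"
  have xi: "?i I \<in> fcarrier (Fo (sub R S))" "?i J \<in> fcarrier (Fo (sub R S))"
    using iso_inv_in[OF iso_sub[OF cS]] I J by auto
  hence xs: "{?i I, ?i J} \<subseteq> fcarrier (Fo (sub R S))" by auto
  have "?i (fsup (pierce_frame (sub R S)) {I, J}) = fsup (Fo (sub R S)) {?i I, ?i J}"
    apply (rule iso_inv_eq[OF iso_sub[OF cS] fsup_in[OF frame_sub[OF cS] xs]])
    using fh_sup[OF iso_hom[OF iso_sub[OF cS]] xs] iso_inv_right[OF iso_sub[OF cS]] I J by simp
  thus ?thesis unfolding gS_def using fh_sup[OF hom_sub[OF cS] xs] by simp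
qed

end


context KSL begin

lemma idem_sub: "idempotents (sub R S) = {e \<in> dc R S. e \<otimes>\<^bsub>R\<^esub> e = e}"
  unfolding idempotents_def sub_def by simp

lemma dn_in: "commuting R S \<Longrightarrow> e \<in> idempotents (sub R S) \<Longrightarrow> dn (sub R S) e \<in> fcarrier (pierce_frame (sub R S))"
  using cring.dn_ideal[OF ring.cring_sub[OF ringR]] unfolding pierce_frame_def by simp

lemma aS_in: "commuting R S \<Longrightarrow> e \<in> idempotents (sub R S) \<Longrightarrow> aS S e \<in> fcarrier (Fo R)"
  unfolding aS_def using gS_in dn_in by blast

lemma zero_sub: "\<zero>\<^bsub>sub R S\<^esub> = \<zero>\<^bsub>R\<^esub>" unfolding sub_def by simp
lemma one_sub: "\<one>\<^bsub>sub R S\<^esub> = \<one>\<^bsub>R\<^esub>" unfolding sub_def by simp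
lemma mult_sub: "x \<otimes>\<^bsub>sub R S\<^esub> y = x \<otimes>\<^bsub>R\<^esub> y" unfolding sub_def by simp
lemma add_sub: "x \<oplus>\<^bsub>sub R S\<^esub> y = x \<oplus>\<^bsub>R\<^esub> y" unfolding sub_def by simp
lemma carrier_sub: "carrier (sub R S) = dc R S" unfolding sub_def by simp

lemma minus_sub:
  assumes cS: "commuting R S" and y: "y \<in> dc R S"
  shows "\<ominus>\<^bsub>sub R S\<^esub> y = \<ominus>\<^bsub>R\<^esub> y"
proof -
  interpret C: cring "sub R S" using ring.cring_sub[OF ringR cS] .
  interpret R: ring R using ringR .
  have yc: "y \<in> carrier (sub R S)" using y carrier_sub by simp
  have "\<ominus>\<^bsub>sub R S\<^esub> y \<oplus>\<^bsub>sub R S\<^esub> y = \<zero>\<^bsub>sub R S\<^esub>" using C.l_neg[OF yc] .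
  hence 1: "\<ominus>\<^bsub>sub R S\<^esub> y \<oplus>\<^bsub>R\<^esub> y = \<zero>\<^bsub>R\<^esub>" by (simp add: add_sub zero_sub)
  have 2: "\<ominus>\<^bsub>sub R S\<^esub> y \<in> carrier R" using C.a_inv_closed[OF yc] carrier_sub R.dc_carrier by auto
  have 3: "y \<in> carrier R" using y R.dc_carrier by auto
  show ?thesis using R.minus_equality[OF 1 3 2] by simp
qed

lemma aS_zero: "commuting R S \<Longrightarrow> aS S \<zero>\<^bsub>R\<^esub> = fbot (Fo R)"
proof -
  assume cS: "commuting R S"
  interpret C: cring "sub R S" using ring.cring_sub[OF ringR cS] .
  show ?thesis unfolding aS_def using C.pierce_bot gS_bot[OF cS] by (simp add: zero_sub)
qed

lemma aS_one: "commuting R S \<Longrightarrow> aS S \<one>\<^bsub>R\<^esub> = ftop (Fo R)"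
proof -
  assume cS: "commuting R S"
  interpret C: cring "sub R S" using ring.cring_sub[OF ringR cS] .
  show ?thesis unfolding aS_def using C.pierce_top C.dn_one gS_top[OF cS] by (simp add: one_sub)
qed

lemma aS_inf:
  assumes cS: "commuting R S" and e: "e \<in> idempotents (sub R S)" and f: "f \<in> idempotents (sub R S)"
  shows "finf (Fo R) (aS S e) (aS S f) = aS S (e \<otimes>\<^bsub>R\<^esub> f)"
proof -
  interpret C: cring "sub R S" using ring.cring_sub[OF ringR cS] .
  show ?thesis unfolding aS_def
    using gS_inf[OF cS dn_in[OF cS e] dn_in[OF cS f]] C.pierce_inf[OF e f] by (simp add: mult_sub)
qed

lemma aS_compl:
  assumes cS: "commuting R S" and e: "e \<in> idempotents (sub R S)"
  shows "fsup (Fo R) {aS S e, aS S (\<one>\<^bsub>R\<^esub> \<ominus>\<^bsub>R\<^esub> e)} = ftop (Fo R)"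
proof -
  interpret C: cring "sub R S" using ring.cring_sub[OF ringR cS] .
  have ed: "e \<in> dc R S" using e idem_sub by auto
  have m: "\<one>\<^bsub>sub R S\<^esub> \<ominus>\<^bsub>sub R S\<^esub> e = \<one>\<^bsub>R\<^esub> \<ominus>\<^bsub>R\<^esub> e"
    unfolding a_minus_def using minus_sub[OF cS ed] by (simp add: add_sub one_sub)
  have ce: "\<one>\<^bsub>sub R S\<^esub> \<ominus>\<^bsub>sub R S\<^esub> e \<in> idempotents (sub R S)"
  proof -
    have ec: "e \<in> carrier (sub R S)" "e \<otimes>\<^bsub>sub R S\<^esub> e = e" using e unfolding idempotents_def by auto
    have "(\<one>\<^bsub>sub R S\<^esub> \<ominus>\<^bsub>sub R S\<^esub> e) \<otimes>\<^bsub>sub R S\<^esub> (\<one>\<^bsub>sub R S\<^esub> \<ominus>\<^bsub>sub R S\<^esub> e)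
       = \<one>\<^bsub>sub R S\<^esub> \<ominus>\<^bsub>sub R S\<^esub> e \<ominus>\<^bsub>sub R S\<^esub> e \<oplus>\<^bsub>sub R S\<^esub> e \<otimes>\<^bsub>sub R S\<^esub> e"
      using ec(1) by algebra
    also have "\<dots> = \<one>\<^bsub>sub R S\<^esub> \<ominus>\<^bsub>sub R S\<^esub> e \<ominus>\<^bsub>sub R S\<^esub> e \<oplus>\<^bsub>sub R S\<^esub> e" by (simp only: ec(2))
    also have "\<dots> = \<one>\<^bsub>sub R S\<^esub> \<ominus>\<^bsub>sub R S\<^esub> e" using ec(1) by algebra
    finally show ?thesis using ec unfolding idempotents_def by auto
  qed
  have "fsup (Fo R) {aS S e, aS S (\<one>\<^bsub>R\<^esub> \<ominus>\<^bsub>R\<^esub> e)}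
      = gS S (fsup (pierce_frame (sub R S)) {dn (sub R S) e, dn (sub R S) (\<one>\<^bsub>sub R S\<^esub> \<ominus>\<^bsub>sub R S\<^esub> e)})"
    unfolding aS_def m[symmetric] using gS_sup2[OF cS dn_in[OF cS e] dn_in[OF cS ce]] by simp
  also have "\<dots> = ftop (Fo R)"
    using C.pierce_sup_compl[OF e] C.pierce_top gS_top[OF cS] by simp
  finally show ?thesis .
qed

lemma compose_incl: "X \<subseteq> Y \<Longrightarrow> compose X (restrict id Y) (restrict id X) = restrict id X"
  unfolding compose_def by (rule ext) (auto simp: restrict_def)

lemma pierce_map_dn:
  assumes cS': "commuting R S'" and SS: "S \<subseteq> S'" and e: "e \<in> idempotents (sub R S)"
  shows "pierce_map (sub R S) (sub R S') (restrict id (dc R S)) (dn (sub R S) e) = dn (sub R S') e"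
proof -
  interpret R: ring R using ringR .
  have dsub: "dc R S \<subseteq> dc R S'" using R.dc_mono[OF SS] .
  have ec: "e \<in> dc R S" "e \<otimes>\<^bsub>R\<^esub> e = e" using e idem_sub by auto
  have eR: "e \<in> carrier R" using ec R.dc_carrier by auto
  show ?thesis
  proof (intro equalityI subsetI)
    fix f assume "f \<in> pierce_map (sub R S) (sub R S') (restrict id (dc R S)) (dn (sub R S) e)"
    then obtain e' where f: "f \<in> idempotents (sub R S')" and e': "e' \<in> dn (sub R S) e"
      and fe: "f \<otimes>\<^bsub>R\<^esub> restrict id (dc R S) e' = f"
      unfolding pierce_map_def by (auto simp: mult_sub)
    have e'c: "e' \<in> dc R S" "e' \<otimes>\<^bsub>R\<^esub> e = e'" using e' unfolding dn_def idem_sub by (auto simp: mult_sub)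
    have fe2: "f \<otimes>\<^bsub>R\<^esub> e' = f" using fe e'c by simp
    have fc: "f \<in> carrier R" using f idem_sub R.dc_carrier by auto
    have e'R: "e' \<in> carrier R" using e'c R.dc_carrier by auto
    have "f \<otimes>\<^bsub>R\<^esub> e = (f \<otimes>\<^bsub>R\<^esub> e') \<otimes>\<^bsub>R\<^esub> e" using fe2 by simp
    also have "\<dots> = f \<otimes>\<^bsub>R\<^esub> (e' \<otimes>\<^bsub>R\<^esub> e)" using fc e'R eR by (simp add: R.m_assoc)
    also have "\<dots> = f" using e'c fe2 by simp
    finally show "f \<in> dn (sub R S') e" using f unfolding dn_def by (simp add: mult_sub)
  next
    fix f assume f: "f \<in> dn (sub R S') e"
    have "e \<in> dn (sub R S) e" using e ec unfolding dn_def by (simp add: mult_sub)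
    moreover have "f \<otimes>\<^bsub>sub R S'\<^esub> restrict id (dc R S) e = f" using f ec unfolding dn_def by (simp add: mult_sub)
    ultimately show "f \<in> pierce_map (sub R S) (sub R S') (restrict id (dc R S)) (dn (sub R S) e)"
      using f unfolding pierce_map_def dn_def by blast
  qed
qed

lemma aS_mono:
  assumes cS': "commuting R S'" and SS: "S \<subseteq> S'" and e: "e \<in> idempotents (sub R S)"
  shows "aS S e = aS S' e"
proof -
  interpret R: ring R using ringR .
  have cS: "commuting R S" using cS' SS unfolding commuting_def by auto
  have dsub: "dc R S \<subseteq> dc R S'" using R.dc_mono[OF SS] .
  let ?D = "sub R S" and ?C = "sub R S'" and ?j = "restrict id (dc R S)"
  have j: "ring_mor ?D ?C ?j" unfolding sub_def
    apply (rule incl_mor[OF ringR])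
    using R.dc_subcring[OF cS] subcring.axioms(1) dsub R.dc_carrier by auto
  let ?x = "inv_into (fcarrier (Fo ?D)) (\<eta> ?D) (dn ?D e)"
  have x: "?x \<in> fcarrier (Fo ?D)" using iso_inv_in[OF iso_sub[OF cS] dn_in[OF cS e]] .
  have ex: "\<eta> ?D ?x = dn ?D e" using iso_inv_right[OF iso_sub[OF cS] dn_in[OF cS e]] .
  have rD: "ring ?D" "ring ?C" using R.ring_sub cS cS' by auto
  have comp: "Fm ?D R (compose (carrier ?D) (restrict id (dc R S')) ?j) ?x
     = Fm ?C R (restrict id (dc R S')) (Fm ?D ?C ?j ?x)"
    by (rule compF[OF rD ringR j mor_sub[OF cS'] x])
  have c2: "compose (carrier ?D) (restrict id (dc R S')) ?j = ?j"
    using compose_incl[OF dsub] carrier_sub by simp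
  have y: "Fm ?D ?C ?j ?x \<in> fcarrier (Fo ?C)" using fh_carrier[OF homFm[OF rD j] x] .
  have ey: "\<eta> ?C (Fm ?D ?C ?j ?x) = dn ?C e"
    using enat[OF R.cring_sub[OF cS] R.cring_sub[OF cS'] j x] ex pierce_map_dn[OF cS' SS e] by simp
  have "Fm ?D ?C ?j ?x = inv_into (fcarrier (Fo ?C)) (\<eta> ?C) (dn ?C e)"
    using iso_inv_eq[OF iso_sub[OF cS'] y ey] by simp
  thus ?thesis unfolding aS_def gS_def using comp c2 by simp
qed

end


lemma (in cring) orth4:
  assumes c: "a \<in> carrier R" "b \<in> carrier R" "c \<in> carrier R" "d \<in> carrier R"
    and o: "a \<otimes> b = \<zero>" "a \<otimes> c = \<zero>" "b \<otimes> c = \<zero>" "a \<otimes> d = \<zero>" "b \<otimes> d = \<zero>" "c \<otimes> d = \<zero>"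
    and s: "a \<oplus> b \<oplus> c \<oplus> d = \<one>"
  shows "(\<one> \<ominus> a) \<otimes> (\<one> \<ominus> b) \<otimes> (\<one> \<ominus> c) \<otimes> (\<one> \<ominus> d) = \<zero>"
proof -
  have "(\<one> \<ominus> a) \<otimes> (\<one> \<ominus> b) = \<one> \<ominus> a \<ominus> b \<oplus> a \<otimes> b" using c by algebra
  also have "\<dots> = \<one> \<ominus> a \<ominus> b \<oplus> \<zero>" by (simp only: o)
  also have "\<dots> = \<one> \<ominus> (a \<oplus> b)" using c by algebra
  finally have 1: "(\<one> \<ominus> a) \<otimes> (\<one> \<ominus> b) = \<one> \<ominus> (a \<oplus> b)" .
  have "(\<one> \<ominus> (a \<oplus> b)) \<otimes> (\<one> \<ominus> c) = \<one> \<ominus> (a \<oplus> b) \<ominus> c \<oplus> (a \<otimes> c \<oplus> b \<otimes> c)" using c by algebra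
  also have "\<dots> = \<one> \<ominus> (a \<oplus> b) \<ominus> c \<oplus> (\<zero> \<oplus> \<zero>)" by (simp only: o)
  also have "\<dots> = \<one> \<ominus> (a \<oplus> b \<oplus> c)" using c by algebra
  finally have 2: "(\<one> \<ominus> (a \<oplus> b)) \<otimes> (\<one> \<ominus> c) = \<one> \<ominus> (a \<oplus> b \<oplus> c)" .
  have "(\<one> \<ominus> (a \<oplus> b \<oplus> c)) \<otimes> (\<one> \<ominus> d) = \<one> \<ominus> (a \<oplus> b \<oplus> c) \<ominus> d \<oplus> (a \<otimes> d \<oplus> b \<otimes> d \<oplus> c \<otimes> d)" using c by algebra
  also have "\<dots> = \<one> \<ominus> (a \<oplus> b \<oplus> c) \<ominus> d \<oplus> (\<zero> \<oplus> \<zero> \<oplus> \<zero>)" by (simp only: o)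
  also have "\<dots> = \<one> \<ominus> (a \<oplus> b \<oplus> c \<oplus> d)" using c by algebra
  also have "\<dots> = \<one> \<ominus> \<one>" by (simp only: s)
  also have "\<dots> = \<zero>" by algebra
  finally have 3: "(\<one> \<ominus> (a \<oplus> b \<oplus> c)) \<otimes> (\<one> \<ominus> d) = \<zero>" .
  show ?thesis using 1 2 3 by simp
qed

context KSL begin

definition av :: "'a \<Rightarrow> 'b" where "av e = aS {e} e"
definition avc :: "'a \<Rightarrow> 'b" where "avc e = aS {e} (\<one>\<^bsub>R\<^esub> \<ominus>\<^bsub>R\<^esub> e)"

lemma minus_idem:
  assumes "e \<in> carrier R" "e \<otimes>\<^bsub>R\<^esub> e = e"
  shows "(\<one>\<^bsub>R\<^esub> \<ominus>\<^bsub>R\<^esub> e) \<otimes>\<^bsub>R\<^esub> (\<one>\<^bsub>R\<^esub> \<ominus>\<^bsub>R\<^esub> e) = \<one>\<^bsub>R\<^esub> \<ominus>\<^bsub>R\<^esub> e"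
proof -
  interpret R: ring R using ringR .
  have "(\<one>\<^bsub>R\<^esub> \<ominus>\<^bsub>R\<^esub> e) \<otimes>\<^bsub>R\<^esub> (\<one>\<^bsub>R\<^esub> \<ominus>\<^bsub>R\<^esub> e) = \<one>\<^bsub>R\<^esub> \<ominus>\<^bsub>R\<^esub> e \<ominus>\<^bsub>R\<^esub> e \<oplus>\<^bsub>R\<^esub> e \<otimes>\<^bsub>R\<^esub> e"
    using assms(1) by (simp add: R.r_distr R.l_distr R.l_minus R.r_minus a_minus_def R.a_ac R.minus_add R.minus_minus)
  also have "\<dots> = (\<one>\<^bsub>R\<^esub> \<ominus>\<^bsub>R\<^esub> e) \<oplus>\<^bsub>R\<^esub> (\<ominus>\<^bsub>R\<^esub> e \<oplus>\<^bsub>R\<^esub> e)"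
    using assms by (simp add: a_minus_def R.a_assoc)
  also have "\<dots> = \<one>\<^bsub>R\<^esub> \<ominus>\<^bsub>R\<^esub> e" using assms by (simp add: R.l_neg)
  finally show ?thesis .
qed

lemma in_idem_sub:
  assumes cS: "commuting R S" and e: "e \<in> S" "e \<otimes>\<^bsub>R\<^esub> e = e"
  shows "e \<in> idempotents (sub R S)" "\<one>\<^bsub>R\<^esub> \<ominus>\<^bsub>R\<^esub> e \<in> idempotents (sub R S)"
proof -
  interpret R: ring R using ringR .
  have ed: "e \<in> dc R S" using R.S_dc[OF cS] e by auto
  thus "e \<in> idempotents (sub R S)" using e idem_sub by auto
  have sr: "subring (dc R S) R" using R.dc_subcring[OF cS] subcring.axioms(1) by blast
  have "\<one>\<^bsub>R\<^esub> \<ominus>\<^bsub>R\<^esub> e \<in> dc R S" unfolding a_minus_def using subringE[OF sr] ed by auto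
  moreover have "e \<in> carrier R" using ed R.dc_carrier by auto
  ultimately show "\<one>\<^bsub>R\<^esub> \<ominus>\<^bsub>R\<^esub> e \<in> idempotents (sub R S)" using idem_sub minus_idem e by auto
qed

lemma comm1: "e \<in> carrier R \<Longrightarrow> commuting R {e}" unfolding commuting_def by auto

lemma av_eq:
  assumes cS: "commuting R S" and e: "e \<in> S" "e \<otimes>\<^bsub>R\<^esub> e = e"
  shows "av e = aS S e" "avc e = aS S (\<one>\<^bsub>R\<^esub> \<ominus>\<^bsub>R\<^esub> e)"
proof -
  have ec: "e \<in> carrier R" using cS e unfolding commuting_def by auto
  show "av e = aS S e" unfolding av_def
    by (rule aS_mono[OF cS _ in_idem_sub(1)[OF comm1[OF ec] _ e(2)]]) (auto simp: e)
  show "avc e = aS S (\<one>\<^bsub>R\<^esub> \<ominus>\<^bsub>R\<^esub> e)" unfolding avc_def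
    by (rule aS_mono[OF cS _ in_idem_sub(2)[OF comm1[OF ec] _ e(2)]]) (auto simp: e)
qed

lemma av_in: "e \<in> carrier R \<Longrightarrow> e \<otimes>\<^bsub>R\<^esub> e = e \<Longrightarrow> av e \<in> fcarrier (Fo R)"
  unfolding av_def using aS_in comm1 in_idem_sub by blast
lemma avc_in: "e \<in> carrier R \<Longrightarrow> e \<otimes>\<^bsub>R\<^esub> e = e \<Longrightarrow> avc e \<in> fcarrier (Fo R)"
  unfolding avc_def using aS_in comm1 in_idem_sub by blast
lemma av_compl: "e \<in> carrier R \<Longrightarrow> e \<otimes>\<^bsub>R\<^esub> e = e \<Longrightarrow> fsup (Fo R) {av e, avc e} = ftop (Fo R)"
  unfolding av_def avc_def using aS_compl comm1 in_idem_sub by blast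

lemma aS_inf2:
  assumes cS: "commuting R S" and x: "x \<in> idempotents (sub R S)" and y: "y \<in> idempotents (sub R S)"
  shows "finf (Fo R) (aS S x) (aS S y) = aS S (x \<otimes>\<^bsub>R\<^esub> y)" "x \<otimes>\<^bsub>R\<^esub> y \<in> idempotents (sub R S)"
proof -
  interpret C: cring "sub R S" using ring.cring_sub[OF ringR cS] .
  show "finf (Fo R) (aS S x) (aS S y) = aS S (x \<otimes>\<^bsub>R\<^esub> y)" using aS_inf[OF cS x y] .
  have "x \<otimes>\<^bsub>sub R S\<^esub> y \<in> idempotents (sub R S)"
    using x y C.idem_mult unfolding idempotents_def by auto
  thus "x \<otimes>\<^bsub>R\<^esub> y \<in> idempotents (sub R S)" by (simp add: mult_sub)
qed

end


definition octx :: "'a ring \<Rightarrow> 'a \<Rightarrow> 'a \<Rightarrow> 'a \<Rightarrow> 'a \<Rightarrow> bool" where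
  "octx R a b c d \<longleftrightarrow> a \<otimes>\<^bsub>R\<^esub> b = \<zero>\<^bsub>R\<^esub> \<and> b \<otimes>\<^bsub>R\<^esub> a = \<zero>\<^bsub>R\<^esub> \<and> a \<otimes>\<^bsub>R\<^esub> c = \<zero>\<^bsub>R\<^esub> \<and> c \<otimes>\<^bsub>R\<^esub> a = \<zero>\<^bsub>R\<^esub>
    \<and> b \<otimes>\<^bsub>R\<^esub> c = \<zero>\<^bsub>R\<^esub> \<and> c \<otimes>\<^bsub>R\<^esub> b = \<zero>\<^bsub>R\<^esub> \<and> a \<otimes>\<^bsub>R\<^esub> d = \<zero>\<^bsub>R\<^esub> \<and> d \<otimes>\<^bsub>R\<^esub> a = \<zero>\<^bsub>R\<^esub>
    \<and> b \<otimes>\<^bsub>R\<^esub> d = \<zero>\<^bsub>R\<^esub> \<and> d \<otimes>\<^bsub>R\<^esub> b = \<zero>\<^bsub>R\<^esub> \<and> c \<otimes>\<^bsub>R\<^esub> d = \<zero>\<^bsub>R\<^esub> \<and> d \<otimes>\<^bsub>R\<^esub> c = \<zero>\<^bsub>R\<^esub>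
    \<and> a \<oplus>\<^bsub>R\<^esub> b \<oplus>\<^bsub>R\<^esub> c \<oplus>\<^bsub>R\<^esub> d = \<one>\<^bsub>R\<^esub>"

definition idem :: "'a ring \<Rightarrow> 'a \<Rightarrow> bool" where
  "idem R e \<longleftrightarrow> e \<in> carrier R \<and> e \<otimes>\<^bsub>R\<^esub> e = e"

context KSL begin

lemma pair_excl:
  assumes cS: "commuting R S" and x: "x \<in> S" "x \<otimes>\<^bsub>R\<^esub> x = x" and y: "y \<in> S" "y \<otimes>\<^bsub>R\<^esub> y = y"
    and xy: "x \<otimes>\<^bsub>R\<^esub> y = \<zero>\<^bsub>R\<^esub>" and A: "A \<in> fcarrier (Fo R)"
    and Ax: "fle (Fo R) A (av x)" and Ay: "fle (Fo R) A (av y)"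
  shows "A = fbot (Fo R)"
proof -
  have ix: "x \<in> idempotents (sub R S)" and iy: "y \<in> idempotents (sub R S)"
    using in_idem_sub[OF cS] x y by auto
  have "fle (Fo R) A (finf (Fo R) (aS S x) (aS S y))"
    apply (rule le_finf[OF frameR aS_in[OF cS ix] aS_in[OF cS iy] A])
    using Ax Ay av_eq[OF cS] x y by auto
  also have "finf (Fo R) (aS S x) (aS S y) = fbot (Fo R)"
    using aS_inf2(1)[OF cS ix iy] xy aS_zero[OF cS] by simp
  finally show ?thesis using le_bot[OF frameR A] by simp
qed

lemma le_inf3:
  assumes cS: "commuting R S" and x: "x \<in> idempotents (sub R S)" and y: "y \<in> idempotents (sub R S)"
    and A: "A \<in> fcarrier (Fo R)" and Ax: "fle (Fo R) A (aS S x)" and Ay: "fle (Fo R) A (aS S y)"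
  shows "fle (Fo R) A (aS S (x \<otimes>\<^bsub>R\<^esub> y))"
  using le_finf[OF frameR aS_in[OF cS x] aS_in[OF cS y] A Ax Ay] aS_inf2(1)[OF cS x y] by simp

lemma ctx_excl:
  assumes x: "idem R x" and y: "idem R y" and z: "idem R z" and w: "idem R w"
    and o: "octx R x y z w" and A: "A \<in> fcarrier (Fo R)"
    and Ax: "fle (Fo R) A (avc x)" and Ay: "fle (Fo R) A (avc y)"
    and Az: "fle (Fo R) A (avc z)" and Aw: "fle (Fo R) A (avc w)"
  shows "A = fbot (Fo R)"
proof -
  interpret R: ring R using ringR .
  let ?S = "{x,y,z,w}"
  have cS: "commuting R ?S" using x y z w o unfolding commuting_def idem_def octx_def by auto
  interpret C: cring "sub R ?S" using R.cring_sub[OF cS] .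
  have xS: "x \<in> ?S" "y \<in> ?S" "z \<in> ?S" "w \<in> ?S" by auto
  have idm: "x \<otimes>\<^bsub>R\<^esub> x = x" "y \<otimes>\<^bsub>R\<^esub> y = y" "z \<otimes>\<^bsub>R\<^esub> z = z" "w \<otimes>\<^bsub>R\<^esub> w = w"
    using x y z w unfolding idem_def by auto
  let ?c = "\<lambda>e. \<one>\<^bsub>R\<^esub> \<ominus>\<^bsub>R\<^esub> e"
  have ci: "?c x \<in> idempotents (sub R ?S)" "?c y \<in> idempotents (sub R ?S)"
     "?c z \<in> idempotents (sub R ?S)" "?c w \<in> idempotents (sub R ?S)"
    using in_idem_sub(2)[OF cS] xS idm by auto
  have A': "fle (Fo R) A (aS ?S (?c x))" "fle (Fo R) A (aS ?S (?c y))"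
    "fle (Fo R) A (aS ?S (?c z))" "fle (Fo R) A (aS ?S (?c w))"
    using Ax Ay Az Aw av_eq(2)[OF cS] xS idm by auto
  have m1: "?c x \<otimes>\<^bsub>R\<^esub> ?c y \<in> idempotents (sub R ?S)" using aS_inf2(2)[OF cS ci(1,2)] .
  have m2: "?c x \<otimes>\<^bsub>R\<^esub> ?c y \<otimes>\<^bsub>R\<^esub> ?c z \<in> idempotents (sub R ?S)" using aS_inf2(2)[OF cS m1 ci(3)] .
  have l1: "fle (Fo R) A (aS ?S (?c x \<otimes>\<^bsub>R\<^esub> ?c y))" using le_inf3[OF cS ci(1,2) A A'(1,2)] .
  have l2: "fle (Fo R) A (aS ?S (?c x \<otimes>\<^bsub>R\<^esub> ?c y \<otimes>\<^bsub>R\<^esub> ?c z))" using le_inf3[OF cS m1 ci(3) A l1 A'(3)] .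
  have l3: "fle (Fo R) A (aS ?S (?c x \<otimes>\<^bsub>R\<^esub> ?c y \<otimes>\<^bsub>R\<^esub> ?c z \<otimes>\<^bsub>R\<^esub> ?c w))" using le_inf3[OF cS m2 ci(4) A l2 A'(4)] .
  have dcS: "?S \<subseteq> carrier (sub R ?S)" using R.S_dc[OF cS] carrier_sub by auto
  have mins: "\<And>e. e \<in> ?S \<Longrightarrow> \<one>\<^bsub>sub R ?S\<^esub> \<ominus>\<^bsub>sub R ?S\<^esub> e = ?c e"
    unfolding a_minus_def using minus_sub[OF cS] R.S_dc[OF cS] by (auto simp: add_sub one_sub)
  have "(\<one>\<^bsub>sub R ?S\<^esub> \<ominus>\<^bsub>sub R ?S\<^esub> x) \<otimes>\<^bsub>sub R ?S\<^esub> (\<one>\<^bsub>sub R ?S\<^esub> \<ominus>\<^bsub>sub R ?S\<^esub> y)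
     \<otimes>\<^bsub>sub R ?S\<^esub> (\<one>\<^bsub>sub R ?S\<^esub> \<ominus>\<^bsub>sub R ?S\<^esub> z) \<otimes>\<^bsub>sub R ?S\<^esub> (\<one>\<^bsub>sub R ?S\<^esub> \<ominus>\<^bsub>sub R ?S\<^esub> w) = \<zero>\<^bsub>sub R ?S\<^esub>"
    apply (rule C.orth4)
    using dcS o unfolding octx_def by (auto simp: mult_sub zero_sub add_sub one_sub)
  hence "?c x \<otimes>\<^bsub>R\<^esub> ?c y \<otimes>\<^bsub>R\<^esub> ?c z \<otimes>\<^bsub>R\<^esub> ?c w = \<zero>\<^bsub>R\<^esub>"
    using mins[of x] mins[of y] mins[of z] mins[of w] by (simp add: mult_sub zero_sub)
  thus ?thesis using l3 aS_zero[OF cS] le_bot[OF frameR A] by simp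
qed

lemma ks_abstract:
  fixes E :: "nat \<Rightarrow> 'a" and q :: 'a and N :: nat and T :: "(nat \<times> nat \<times> nat) list"
  assumes Eid: "\<And>r. r < N \<Longrightarrow> idem R (E r)"
    and qid: "idem R q"
    and Tb: "\<forall>(a,b,c)\<in>set T. a < N \<and> b < N \<and> c < N"
    and orth: "\<forall>(a,b,c)\<in>set T. octx R (E a) (E b) (E c) q"
    and sat: "\<And>v::nat\<Rightarrow>bool. (\<forall>(a,b,c)\<in>set T. (v a \<or> v b \<or> v c) \<and> \<not>(v a \<and> v b) \<and> \<not>(v a \<and> v c) \<and> \<not>(v b \<and> v c)) \<Longrightarrow> False"
  shows "avc q = fbot (Fo R)"
proof (rule ccontr)
  assume cne: "avc q \<noteq> fbot (Fo R)"
  have qc: "q \<in> carrier R" "q \<otimes>\<^bsub>R\<^esub> q = q" using qid unfolding idem_def by auto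
  let ?ps = "map (\<lambda>r. (av (E r), avc (E r))) [0..<N]"
  have ps: "set ?ps \<subseteq> {(x,y). x \<in> fcarrier (Fo R) \<and> y \<in> fcarrier (Fo R) \<and> fsup (Fo R) {x,y} = ftop (Fo R)}"
  proof
    fix p assume "p \<in> set ?ps"
    then obtain r where r: "r < N" and p: "p = (av (E r), avc (E r))" by auto
    have "E r \<in> carrier R" "E r \<otimes>\<^bsub>R\<^esub> E r = E r" using Eid[OF r] unfolding idem_def by auto
    thus "p \<in> {(x,y). x \<in> fcarrier (Fo R) \<and> y \<in> fcarrier (Fo R) \<and> fsup (Fo R) {x,y} = ftop (Fo R)}"
      using p av_in avc_in av_compl by simp
  qed
  obtain A where A: "A \<in> fcarrier (Fo R)" "A \<noteq> fbot (Fo R)" "fle (Fo R) A (avc q)"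
     and Ad: "\<forall>(x,y)\<in>set ?ps. fle (Fo R) A x \<or> fle (Fo R) A y"
    using atoms_exist[OF frameR ps avc_in[OF qc] cne] by blast
  have dec: "fle (Fo R) A (av (E r)) \<or> fle (Fo R) A (avc (E r))" if r: "r < N" for r
  proof -
    have "(av (E r), avc (E r)) \<in> set ?ps" using r by auto
    from bspec[OF Ad this] show ?thesis by simp
  qed
  let ?v = "\<lambda>r. fle (Fo R) A (av (E r))"
  have "\<forall>(a,b,c)\<in>set T. (?v a \<or> ?v b \<or> ?v c) \<and> \<not>(?v a \<and> ?v b) \<and> \<not>(?v a \<and> ?v c) \<and> \<not>(?v b \<and> ?v c)"
  proof (intro ballI, clarify)
    fix a b c assume t: "(a,b,c) \<in> set T"
    have abc: "a < N" "b < N" "c < N" using Tb t by auto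
    have o: "octx R (E a) (E b) (E c) q" using orth t by auto
    have ia: "idem R (E a)" "idem R (E b)" "idem R (E c)" using Eid abc by auto
    have cS: "commuting R {E a, E b, E c, q}" using ia qid o unfolding commuting_def idem_def octx_def by auto
    have ii: "E a \<otimes>\<^bsub>R\<^esub> E a = E a" "E b \<otimes>\<^bsub>R\<^esub> E b = E b" "E c \<otimes>\<^bsub>R\<^esub> E c = E c"
      using ia unfolding idem_def by auto
    have oo: "E a \<otimes>\<^bsub>R\<^esub> E b = \<zero>\<^bsub>R\<^esub>" "E a \<otimes>\<^bsub>R\<^esub> E c = \<zero>\<^bsub>R\<^esub>" "E b \<otimes>\<^bsub>R\<^esub> E c = \<zero>\<^bsub>R\<^esub>"
      using o unfolding octx_def by auto
    show "(?v a \<or> ?v b \<or> ?v c) \<and> \<not>(?v a \<and> ?v b) \<and> \<not>(?v a \<and> ?v c) \<and> \<not>(?v b \<and> ?v c)"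
    proof (intro conjI notI)
      show "?v a \<or> ?v b \<or> ?v c"
      proof (rule ccontr)
        assume "\<not> (?v a \<or> ?v b \<or> ?v c)"
        hence "fle (Fo R) A (avc (E a))" "fle (Fo R) A (avc (E b))" "fle (Fo R) A (avc (E c))"
          using dec[OF abc(1)] dec[OF abc(2)] dec[OF abc(3)] by auto
        thus False using ctx_excl[OF ia qid o A(1) _ _ _ A(3)] A(2) by blast
      qed
    next
      assume "?v a \<and> ?v b" thus False using pair_excl[OF cS _ ii(1) _ ii(2) oo(1) A(1)] A(2) by auto
    next
      assume "?v a \<and> ?v c" thus False using pair_excl[OF cS _ ii(1) _ ii(3) oo(2) A(1)] A(2) by auto
    next
      assume "?v b \<and> ?v c" thus False using pair_excl[OF cS _ ii(2) _ ii(3) oo(3) A(1)] A(2) by auto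
    qed
  qed
  thus False by (rule sat)
qed

end


definition c3 :: "int \<times> int \<times> int \<Rightarrow> nat \<Rightarrow> int" where
  "c3 u i = (if i = 0 then fst u else if i = 1 then fst (snd u) else snd (snd u))"
definition inT :: "nat \<Rightarrow> nat \<Rightarrow> bool" where "inT k a \<longleftrightarrow> a = 0 \<or> a = 1 \<or> a = k"
definition idx :: "nat \<Rightarrow> nat" where "idx a = (if a = 0 then 0 else if a = 1 then 1 else 2)"
definition lift :: "nat \<Rightarrow> int \<times> int \<times> int \<Rightarrow> nat \<Rightarrow> complex" where
  "lift k u a = (if inT k a then of_int (c3 u (idx a)) else 0)"
definition nrm :: "int \<times> int \<times> int \<Rightarrow> int" where
  "nrm u = c3 u 0 * c3 u 0 + c3 u 1 * c3 u 1 + c3 u 2 * c3 u 2"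
definition dot3 :: "int \<times> int \<times> int \<Rightarrow> int \<times> int \<times> int \<Rightarrow> int" where
  "dot3 u v = c3 u 0 * c3 v 0 + c3 u 1 * c3 v 1 + c3 u 2 * c3 v 2"
definition Pm :: "nat \<Rightarrow> nat \<Rightarrow> int \<times> int \<times> int \<Rightarrow> complex mat" where
  "Pm n k u = mat n n (\<lambda>(a,b). lift k u a * lift k u b / of_int (nrm u))"
definition Dm :: "nat \<Rightarrow> (nat \<Rightarrow> bool) \<Rightarrow> complex mat" where
  "Dm n p = mat n n (\<lambda>(a,b). if a = b \<and> p a then 1 else 0)"
definition Qm :: "nat \<Rightarrow> nat \<Rightarrow> complex mat" where
  "Qm n k = Dm n (\<lambda>a. \<not> inT k a)"
definition compl :: "int \<times> int \<times> int \<Rightarrow> int \<times> int \<times> int \<Rightarrow> int \<times> int \<times> int \<Rightarrow> bool" where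
  "compl u v w \<longleftrightarrow> (\<forall>i\<in>{0,1,2}. \<forall>j\<in>{0,1,2}.
      c3 u i * c3 u j * nrm v * nrm w + c3 v i * c3 v j * nrm u * nrm w + c3 w i * c3 w j * nrm u * nrm v
      = (if i = j then nrm u * nrm v * nrm w else 0))"

lemma mult_entry:
  assumes "A \<in> carrier_mat n n" "B \<in> carrier_mat n n" "a < n" "b < n"
  shows "(A * B) $$ (a,b) = (\<Sum>c<n. A $$ (a,c) * B $$ (c,b))"
  using assms by (simp add: scalar_prod_def lessThan_atLeast0)

lemma sum_T:
  assumes k: "2 \<le> k" "k < n" and f: "\<And>a. \<not> inT k a \<Longrightarrow> f a = 0"
  shows "(\<Sum>c<n. f c) = f 0 + f 1 + f k"
proof -
  have "(\<Sum>c<n. f c) = (\<Sum>c\<in>{0,1,k}. f c)"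
  proof (rule sum.mono_neutral_right)
    show "finite {..<n}" by simp
    show "{0,1,k} \<subseteq> {..<n}" using k by auto
    show "\<forall>i\<in>{..<n} - {0,1,k}. f i = 0"
    proof
      fix i assume "i \<in> {..<n} - {0,1,k}"
      hence "\<not> inT k i" unfolding inT_def by auto
      thus "f i = 0" by (rule f)
    qed
  qed
  also have "\<dots> = f 0 + f 1 + f k" using k by (simp add: add.assoc)
  finally show ?thesis .
qed

lemma dot_lift:
  assumes k: "2 \<le> k" "k < n"
  shows "(\<Sum>c<n. lift k u c * lift k v c) = of_int (dot3 u v)"
  apply (subst sum_T[OF k])
   apply (simp add: lift_def)
  using k by (simp add: lift_def inT_def idx_def dot3_def)

lemma Pm_carrier: "Pm n k u \<in> carrier_mat n n" unfolding Pm_def by simp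
lemma Dm_carrier: "Dm n p \<in> carrier_mat n n" unfolding Dm_def by simp
lemma Qm_carrier: "Qm n k \<in> carrier_mat n n" unfolding Qm_def by (rule Dm_carrier)

lemma Pm_mult:
  assumes k: "2 \<le> k" "k < n"
  shows "Pm n k u * Pm n k v = mat n n (\<lambda>(a,b). lift k u a * lift k v b * of_int (dot3 u v) / (of_int (nrm u) * of_int (nrm v)))"
proof (rule eq_matI)
  fix a b assume ab: "a < dim_row (mat n n (\<lambda>(a,b). lift k u a * lift k v b * of_int (dot3 u v) / (of_int (nrm u) * of_int (nrm v))))"
     "b < dim_col (mat n n (\<lambda>(a,b). lift k u a * lift k v b * of_int (dot3 u v) / (of_int (nrm u) * of_int (nrm v))))"
  hence a: "a < n" and b: "b < n" by auto
  have "(Pm n k u * Pm n k v) $$ (a,b) = (\<Sum>c<n. Pm n k u $$ (a,c) * Pm n k v $$ (c,b))"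
    by (rule mult_entry[OF Pm_carrier Pm_carrier a b])
  also have "\<dots> = (\<Sum>c<n. (lift k u a * lift k v b * inverse (of_int (nrm u)) * inverse (of_int (nrm v))) * (lift k u c * lift k v c))"
    apply (rule sum.cong[OF refl])
    using a b by (simp add: Pm_def divide_inverse mult_ac)
  also have "\<dots> = (lift k u a * lift k v b * inverse (of_int (nrm u)) * inverse (of_int (nrm v))) * of_int (dot3 u v)"
    by (simp add: sum_distrib_left[symmetric] dot_lift[OF k])
  also have "\<dots> = mat n n (\<lambda>(a,b). lift k u a * lift k v b * of_int (dot3 u v) / (of_int (nrm u) * of_int (nrm v))) $$ (a,b)"
    using a b by (simp add: divide_inverse mult_ac)
  finally show "(Pm n k u * Pm n k v) $$ (a,b) = mat n n (\<lambda>(a,b). lift k u a * lift k v b * of_int (dot3 u v) / (of_int (nrm u) * of_int (nrm v))) $$ (a,b)" .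
qed (auto simp: Pm_def)

lemma Pm_orth:
  assumes k: "2 \<le> k" "k < n" and d: "dot3 u v = 0"
  shows "Pm n k u * Pm n k v = 0\<^sub>m n n"
  unfolding Pm_mult[OF k] d by (rule eq_matI) auto

lemma Pm_idem:
  assumes k: "2 \<le> k" "k < n" and d: "nrm u \<noteq> 0"
  shows "Pm n k u * Pm n k u = Pm n k u"
proof -
  have "dot3 u u = nrm u" unfolding dot3_def nrm_def by simp
  hence e: "dot3 u u = nrm u" .
  show ?thesis unfolding Pm_mult[OF k]
    apply (rule eq_matI)
    using d e by (auto simp: Pm_def)
qed

lemma Dm_mult: "Dm n p * Dm n p' = Dm n (\<lambda>a. p a \<and> p' a)"
proof (rule eq_matI)
  fix a b assume "a < dim_row (Dm n (\<lambda>a. p a \<and> p' a))" "b < dim_col (Dm n (\<lambda>a. p a \<and> p' a))"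
  hence a: "a < n" and b: "b < n" by (auto simp: Dm_def)
  have "(Dm n p * Dm n p') $$ (a,b) = (\<Sum>c<n. Dm n p $$ (a,c) * Dm n p' $$ (c,b))"
    by (rule mult_entry[OF Dm_carrier Dm_carrier a b])
  also have "\<dots> = (\<Sum>c<n. if c = a then (if a = b \<and> p a \<and> p' a then 1 else 0) else 0)"
    apply (rule sum.cong[OF refl]) using a b by (auto simp: Dm_def)
  also have "\<dots> = Dm n (\<lambda>a. p a \<and> p' a) $$ (a,b)" using a b by (simp add: Dm_def)
  finally show "(Dm n p * Dm n p') $$ (a,b) = Dm n (\<lambda>a. p a \<and> p' a) $$ (a,b)" .
qed (auto simp: Dm_def)

lemma Dm_comm: "Dm n p * Dm n p' = Dm n p' * Dm n p"
  unfolding Dm_mult by (metis (no_types, lifting) ext)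

lemma Qm_idem: "Qm n k * Qm n k = Qm n k"
  unfolding Qm_def Dm_mult by simp

lemma Pm_Qm:
  assumes k: "2 \<le> k" "k < n"
  shows "Pm n k u * Qm n k = 0\<^sub>m n n" "Qm n k * Pm n k u = 0\<^sub>m n n"
proof -
  show "Pm n k u * Qm n k = 0\<^sub>m n n"
  proof (rule eq_matI)
    fix a b assume "a < dim_row (0\<^sub>m n n :: complex mat)" "b < dim_col (0\<^sub>m n n :: complex mat)"
    hence a: "a < n" and b: "b < n" by auto
    have "(Pm n k u * Qm n k) $$ (a,b) = (\<Sum>c<n. Pm n k u $$ (a,c) * Qm n k $$ (c,b))"
      by (rule mult_entry[OF Pm_carrier Qm_carrier a b])
    also have "\<dots> = (\<Sum>c<n. 0)"
      apply (rule sum.cong[OF refl]) using a b by (auto simp: Pm_def Qm_def Dm_def lift_def)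
    finally show "(Pm n k u * Qm n k) $$ (a,b) = 0\<^sub>m n n $$ (a,b)" using a b by simp
  qed (auto simp: Pm_def Qm_def Dm_def)
  show "Qm n k * Pm n k u = 0\<^sub>m n n"
  proof (rule eq_matI)
    fix a b assume "a < dim_row (0\<^sub>m n n :: complex mat)" "b < dim_col (0\<^sub>m n n :: complex mat)"
    hence a: "a < n" and b: "b < n" by auto
    have "(Qm n k * Pm n k u) $$ (a,b) = (\<Sum>c<n. Qm n k $$ (a,c) * Pm n k u $$ (c,b))"
      by (rule mult_entry[OF Qm_carrier Pm_carrier a b])
    also have "\<dots> = (\<Sum>c<n. 0)"
      apply (rule sum.cong[OF refl]) using a b by (auto simp: Pm_def Qm_def Dm_def lift_def)
    finally show "(Qm n k * Pm n k u) $$ (a,b) = 0\<^sub>m n n $$ (a,b)" using a b by simp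
  qed (auto simp: Pm_def Qm_def Dm_def)
qed

lemma div3:
  fixes A B C D nu nv nw :: complex
  assumes "nu \<noteq> 0" "nv \<noteq> 0" "nw \<noteq> 0" "A*nv*nw + B*nu*nw + C*nu*nv = D*nu*nv*nw"
  shows "A/nu + B/nv + C/nw = D"
proof -
  have "A/nu + B/nv + C/nw = (A*nv*nw + B*nu*nw + C*nu*nv)/(nu*nv*nw)" using assms by (simp add: field_simps)
  also have "\<dots> = D" using assms by simp
  finally show ?thesis .
qed

lemma div3int:
  fixes A B C D nu nv nw :: int
  assumes nz: "nu \<noteq> 0" "nv \<noteq> 0" "nw \<noteq> 0" and e: "A*nv*nw + B*nu*nw + C*nu*nv = D*nu*nv*nw"
  shows "of_int A / of_int nu + of_int B / of_int nv + of_int C / of_int nw = (of_int D :: complex)"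
proof -
  have "of_int (A*nv*nw + B*nu*nw + C*nu*nv) = (of_int (D*nu*nv*nw) :: complex)" by (simp only: e)
  hence "of_int A * of_int nv * of_int nw + of_int B * of_int nu * of_int nw + of_int C * of_int nu * of_int nv
       = of_int D * of_int nu * of_int nv * (of_int nw :: complex)" by simp
  from div3[OF _ _ _ this] nz show ?thesis by simp
qed

lemma idx_eq: "2 \<le> k \<Longrightarrow> inT k a \<Longrightarrow> inT k b \<Longrightarrow> (idx a = idx b) = (a = b)"
  unfolding inT_def idx_def by auto

lemma idx_range: "idx a \<in> {0,1,2}" unfolding idx_def by auto

lemma Pm_sum:
  assumes k: "2 \<le> k" "k < n" and c: "compl u v w" and nz: "nrm u \<noteq> 0" "nrm v \<noteq> 0" "nrm w \<noteq> 0"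
  shows "Pm n k u + Pm n k v + Pm n k w + Qm n k = 1\<^sub>m n"
proof (rule eq_matI)
  fix a b assume "a < dim_row (1\<^sub>m n :: complex mat)" "b < dim_col (1\<^sub>m n :: complex mat)"
  hence a: "a < n" and b: "b < n" by auto
  have lhs: "(Pm n k u + Pm n k v + Pm n k w + Qm n k) $$ (a,b) =
    lift k u a * lift k u b / of_int (nrm u) + lift k v a * lift k v b / of_int (nrm v)
    + lift k w a * lift k w b / of_int (nrm w) + (if a = b \<and> \<not> inT k a then 1 else 0)"
    using a b by (simp add: Pm_def Qm_def Dm_def)
  show "(Pm n k u + Pm n k v + Pm n k w + Qm n k) $$ (a,b) = 1\<^sub>m n $$ (a,b)"
  proof (cases "inT k a \<and> inT k b")
    case True
    let ?i = "idx a" and ?j = "idx b"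
    have ie: "c3 u ?i * c3 u ?j * nrm v * nrm w + c3 v ?i * c3 v ?j * nrm u * nrm w + c3 w ?i * c3 w ?j * nrm u * nrm v
      = (if ?i = ?j then nrm u * nrm v * nrm w else 0)"
      using c idx_range[of a] idx_range[of b] unfolding compl_def by blast
    have ij: "(?i = ?j) = (a = b)" using idx_eq[OF k(1)] True by auto
    have ie3: "(c3 u ?i * c3 u ?j) * nrm v * nrm w + (c3 v ?i * c3 v ?j) * nrm u * nrm w + (c3 w ?i * c3 w ?j) * nrm u * nrm v
      = (if a = b then 1 else 0) * nrm u * nrm v * nrm w"
      using ie ij by (simp add: mult.assoc)
    have "lift k u a * lift k u b / of_int (nrm u) + lift k v a * lift k v b / of_int (nrm v)
      + lift k w a * lift k w b / of_int (nrm w) = of_int (if a = b then 1 else 0)"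
      using div3int[OF nz ie3] True unfolding lift_def by simp
    thus ?thesis using lhs True a b by simp
  next
    case False
    hence "lift k u a * lift k u b = 0" "lift k v a * lift k v b = 0" "lift k w a * lift k w b = 0"
      unfolding lift_def by auto
    thus ?thesis using lhs False a b by auto
  qed
qed (auto simp: Pm_def Qm_def Dm_def)


definition ksvecs :: "(int \<times> int \<times> int) list" where "ksvecs = [(0,0,1), (0,1,(-2)), (0,1,(-1)), (0,1,0), (0,1,1), (0,1,2), (0,2,(-1)), (0,2,1), (1,(-5),(-2)), (1,(-5),2), (1,(-4),1), (1,(-2),(-5)), (1,(-2),(-1)), (1,(-2),0), (1,(-2),1), (1,(-2),5), (1,(-1),(-2)), (1,(-1),(-1)), (1,(-1),0), (1,(-1),1), (1,(-1),2), (1,(-1),4), (1,0,(-2)), (1,0,(-1)), (1,0,0), (1,0,1), (1,0,2), (1,1,(-2)), (1,1,(-1)), (1,1,0), (1,1,1), (1,1,2), (1,2,(-2)), (1,2,(-1)), (1,2,1), (1,5,(-2)), (2,(-5),(-1)), (2,(-5),1), (2,(-2),(-1)), (2,(-1),(-1)), (2,0,(-1)), (2,0,1), (2,1,(-5)), (2,1,(-1)), (2,1,0), (2,1,1), (2,1,2), (2,1,5), (4,(-1),1), (5,(-2),(-4)), (5,(-2),1), (5,(-1),(-2)), (5,(-1),2), (5,1,(-2)), (5,1,2), (5,2,(-1)), (5,2,1), (5,4,2)]"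

definition kstrips :: "(nat \<times> nat \<times> nat) list" where "kstrips = [(0,3,24), (0,13,44), (0,18,29), (1,7,24), (1,12,56), (1,38,57), (2,4,24), (2,17,45), (2,30,39), (3,22,41), (3,23,25), (3,26,40), (4,19,43), (4,32,48), (5,6,24), (5,14,55), (5,33,50), (6,16,54), (6,31,51), (6,46,49), (7,20,53), (7,27,52), (8,27,41), (9,31,40), (10,23,46), (11,14,44), (12,15,44), (12,25,28), (13,42,45), (13,43,47), (14,23,30), (16,19,29), (16,35,41), (17,20,29), (17,25,33), (18,27,30), (18,28,31), (19,23,34), (21,29,38), (22,37,45), (26,36,43), (32,38,46)]"

lemma ks_nz: "\<forall>u\<in>set ksvecs. nrm u \<noteq> 0"
  by (simp add: ksvecs_def nrm_def c3_def)

lemma ks_T: "\<forall>(a,b,c)\<in>set kstrips. a < length ksvecs \<and> b < length ksvecs \<and> c < length ksvecs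
   \<and> dot3 (ksvecs!a) (ksvecs!b) = 0 \<and> dot3 (ksvecs!a) (ksvecs!c) = 0 \<and> dot3 (ksvecs!b) (ksvecs!c) = 0
   \<and> compl (ksvecs!a) (ksvecs!b) (ksvecs!c)"
  by code_simp

lemma ks_sat:
  fixes v :: "nat \<Rightarrow> bool"
  assumes "\<forall>(a,b,c)\<in>set kstrips. (v a \<or> v b \<or> v c) \<and> \<not>(v a \<and> v b) \<and> \<not>(v a \<and> v c) \<and> \<not>(v b \<and> v c)"
  shows False
  using assms unfolding kstrips_def apply simp by sat


context KSL begin

context
  fixes \<phi> n assumes phi: "\<phi> \<in> Ring.ring_hom (cmat_ring n) R"
begin

lemma rmat: "ring (cmat_ring n)" by (rule ring_mat)

lemma hm: "A \<in> carrier_mat n n \<Longrightarrow> B \<in> carrier_mat n n \<Longrightarrow> \<phi> A \<otimes>\<^bsub>R\<^esub> \<phi> B = \<phi> (A * B)"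
  using ring_hom_mult[OF phi, of A B] by (simp add: ring_mat_simps)
lemma ha: "A \<in> carrier_mat n n \<Longrightarrow> B \<in> carrier_mat n n \<Longrightarrow> \<phi> A \<oplus>\<^bsub>R\<^esub> \<phi> B = \<phi> (A + B)"
  using ring_hom_add[OF phi, of A B] by (simp add: ring_mat_simps)
lemma hc: "A \<in> carrier_mat n n \<Longrightarrow> \<phi> A \<in> carrier R"
  using ring_hom_closed[OF phi, of A] by (simp add: ring_mat_simps)
lemma h0: "\<phi> (0\<^sub>m n n) = \<zero>\<^bsub>R\<^esub>"
  using ring_hom_zero[OF phi rmat ringR] by (simp add: ring_mat_simps)
lemma h1: "\<phi> (1\<^sub>m n) = \<one>\<^bsub>R\<^esub>"
  using ring_hom_one[OF phi] by (simp add: ring_mat_simps)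

lemma idem_img: "A \<in> carrier_mat n n \<Longrightarrow> A * A = A \<Longrightarrow> idem R (\<phi> A)"
  unfolding idem_def using hc hm by simp

lemma ks_k:
  assumes k: "2 \<le> k" "k < n"
  shows "avc (\<phi> (Qm n k)) = fbot (Fo R)"
proof (rule ks_abstract[where E = "\<lambda>r. \<phi> (Pm n k (ksvecs ! r))" and N = "length ksvecs" and T = kstrips])
  fix r assume "r < length ksvecs"
  hence "nrm (ksvecs ! r) \<noteq> 0" using ks_nz by auto
  thus "idem R (\<phi> (Pm n k (ksvecs ! r)))" using idem_img[OF Pm_carrier] Pm_idem[OF k] by blast
next
  show "idem R (\<phi> (Qm n k))" using idem_img[OF Qm_carrier Qm_idem] .
next
  show "\<forall>(a,b,c)\<in>set kstrips. a < length ksvecs \<and> b < length ksvecs \<and> c < length ksvecs"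
    using ks_T by auto
next
  show "\<forall>(a,b,c)\<in>set kstrips. octx R (\<phi> (Pm n k (ksvecs ! a))) (\<phi> (Pm n k (ksvecs ! b))) (\<phi> (Pm n k (ksvecs ! c))) (\<phi> (Qm n k))"
  proof (intro ballI, clarify)
    fix a b c assume t: "(a,b,c) \<in> set kstrips"
    let ?u = "ksvecs ! a" and ?v = "ksvecs ! b" and ?w = "ksvecs ! c"
    have d: "dot3 ?u ?v = 0" "dot3 ?u ?w = 0" "dot3 ?v ?w = 0" "compl ?u ?v ?w"
      and lt: "a < length ksvecs" "b < length ksvecs" "c < length ksvecs"
      using ks_T t by auto
    have nz: "nrm ?u \<noteq> 0" "nrm ?v \<noteq> 0" "nrm ?w \<noteq> 0" using ks_nz lt by auto
    have sym: "\<And>x y. dot3 x y = dot3 y x" unfolding dot3_def by simp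
    have z: "Pm n k ?u * Pm n k ?v = 0\<^sub>m n n" "Pm n k ?v * Pm n k ?u = 0\<^sub>m n n"
      "Pm n k ?u * Pm n k ?w = 0\<^sub>m n n" "Pm n k ?w * Pm n k ?u = 0\<^sub>m n n"
      "Pm n k ?v * Pm n k ?w = 0\<^sub>m n n" "Pm n k ?w * Pm n k ?v = 0\<^sub>m n n"
      using Pm_orth[OF k d(1)] Pm_orth[OF k d(2)] Pm_orth[OF k d(3)]
        Pm_orth[OF k, of ?v ?u] Pm_orth[OF k, of ?w ?u] Pm_orth[OF k, of ?w ?v] d(1-3) sym[of ?u ?v]
        sym[of ?u ?w] sym[of ?v ?w] by auto
    have s: "Pm n k ?u + Pm n k ?v + Pm n k ?w + Qm n k = 1\<^sub>m n" using Pm_sum[OF k d(4) nz] .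
    have cs: "Pm n k ?u + Pm n k ?v \<in> carrier_mat n n" "Pm n k ?u + Pm n k ?v + Pm n k ?w \<in> carrier_mat n n"
      using Pm_carrier by auto
    have ssum: "\<phi> (Pm n k ?u) \<oplus>\<^bsub>R\<^esub> \<phi> (Pm n k ?v) \<oplus>\<^bsub>R\<^esub> \<phi> (Pm n k ?w) \<oplus>\<^bsub>R\<^esub> \<phi> (Qm n k) = \<one>\<^bsub>R\<^esub>"
      using ha[OF Pm_carrier Pm_carrier] ha[OF cs(1) Pm_carrier] ha[OF cs(2) Qm_carrier] s h1 by simp
    show "octx R (\<phi> (Pm n k ?u)) (\<phi> (Pm n k ?v)) (\<phi> (Pm n k ?w)) (\<phi> (Qm n k))"
      unfolding octx_def
      using ssum z Pm_Qm[OF k] hm[OF Pm_carrier Pm_carrier] hm[OF Pm_carrier Qm_carrier] hm[OF Qm_carrier Pm_carrier] h0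
      by simp
  qed
next
  fix v :: "nat \<Rightarrow> bool"
  assume "\<forall>(a,b,c)\<in>set kstrips. (v a \<or> v b \<or> v c) \<and> \<not>(v a \<and> v b) \<and> \<not>(v a \<and> v c) \<and> \<not>(v b \<and> v c)"
  thus False by (rule ks_sat)
qed

lemma Q_top:
  assumes k: "2 \<le> k" "k < n"
  shows "av (\<phi> (Qm n k)) = ftop (Fo R)"
proof -
  have i: "\<phi> (Qm n k) \<in> carrier R" "\<phi> (Qm n k) \<otimes>\<^bsub>R\<^esub> \<phi> (Qm n k) = \<phi> (Qm n k)"
    using idem_img[OF Qm_carrier Qm_idem] unfolding idem_def by auto
  have "ftop (Fo R) = fsup (Fo R) {av (\<phi> (Qm n k)), fbot (Fo R)}"
    using av_compl[OF i] ks_k[OF k] by simp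
  also have "\<dots> = av (\<phi> (Qm n k))" by (rule fsup_bot2[OF frameR av_in[OF i]])
  finally show ?thesis by simp
qed

lemma Dm_cong: "(\<And>a. p a = p' a) \<Longrightarrow> Dm n p = Dm n p'"
  unfolding Dm_def by (metis ext)

lemma collapse:
  assumes n: "3 \<le> n"
  shows "fbot (Fo R) = ftop (Fo R)"
proof -
  let ?SD = "{\<phi> (Dm n p) | p. True}"
  have cS: "commuting R ?SD" unfolding commuting_def
  proof (intro conjI ballI subsetI)
    fix x assume "x \<in> ?SD" then obtain p where "x = \<phi> (Dm n p)" by blast
    thus "x \<in> carrier R" using hc[OF Dm_carrier] by simp
  next
    fix x y assume "x \<in> ?SD" "y \<in> ?SD"
    then obtain p p' where xy: "x = \<phi> (Dm n p)" "y = \<phi> (Dm n p')" by blast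
    have "x \<otimes>\<^bsub>R\<^esub> y = \<phi> (Dm n p * Dm n p')" using xy hm[OF Dm_carrier Dm_carrier] by simp
    also have "\<dots> = \<phi> (Dm n p' * Dm n p)" by (simp only: Dm_comm[of n p p'])
    also have "\<dots> = y \<otimes>\<^bsub>R\<^esub> x" using xy hm[OF Dm_carrier Dm_carrier] by simp
    finally show "x \<otimes>\<^bsub>R\<^esub> y = y \<otimes>\<^bsub>R\<^esub> x" .
  qed
  have ii: "\<phi> (Dm n p) \<in> idempotents (sub R ?SD)" for p
  proof -
    have "\<phi> (Dm n p) \<otimes>\<^bsub>R\<^esub> \<phi> (Dm n p) = \<phi> (Dm n p)" using hm[OF Dm_carrier Dm_carrier] Dm_mult by simp
    moreover have "\<phi> (Dm n p) \<in> ?SD" by blast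
    ultimately show ?thesis using in_idem_sub(1)[OF cS] by simp
  qed
  have Qd: "Qm n k = Dm n (\<lambda>a. \<not> inT k a)" for k unfolding Qm_def ..
  have Qtop: "aS ?SD (\<phi> (Qm n k)) = ftop (Fo R)" if "2 \<le> k" "k < n" for k
  proof -
    have "\<phi> (Qm n k) \<otimes>\<^bsub>R\<^esub> \<phi> (Qm n k) = \<phi> (Qm n k)" using hm[OF Qm_carrier Qm_carrier] Qm_idem by simp
    moreover have "\<phi> (Qm n k) \<in> ?SD" unfolding Qm_def by blast
    ultimately have "av (\<phi> (Qm n k)) = aS ?SD (\<phi> (Qm n k))" using av_eq(1)[OF cS] by simp
    thus ?thesis using Q_top[OF that] by simp
  qed
  have step: "3 + j \<le> n \<Longrightarrow> aS ?SD (\<phi> (Dm n (\<lambda>a. 3 + j \<le> a))) = ftop (Fo R)" for j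
  proof (induction j)
    case 0
    have "Dm n (\<lambda>a. 3 + 0 \<le> a) = Qm n 2" unfolding Qm_def
      by (rule Dm_cong) (auto simp: inT_def)
    thus ?case using Qtop[of 2] 0 by simp
  next
    case (Suc j)
    let ?k = "3 + j"
    have k: "2 \<le> ?k" "?k < n" using Suc by auto
    have "Dm n (\<lambda>a. 3 + Suc j \<le> a) = Dm n (\<lambda>a. ?k \<le> a) * Qm n ?k"
      unfolding Qm_def Dm_mult by (rule Dm_cong) (auto simp: inT_def)
    hence "\<phi> (Dm n (\<lambda>a. 3 + Suc j \<le> a)) = \<phi> (Dm n (\<lambda>a. ?k \<le> a)) \<otimes>\<^bsub>R\<^esub> \<phi> (Qm n ?k)"
      using hm[OF Dm_carrier Qm_carrier] by simp
    hence "aS ?SD (\<phi> (Dm n (\<lambda>a. 3 + Suc j \<le> a)))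
       = finf (Fo R) (aS ?SD (\<phi> (Dm n (\<lambda>a. ?k \<le> a)))) (aS ?SD (\<phi> (Qm n ?k)))"
      using aS_inf[OF cS ii ii[of "\<lambda>a. \<not> inT ?k a"]] Qd by simp
    also have "\<dots> = finf (Fo R) (ftop (Fo R)) (ftop (Fo R))" using Suc k Qtop by simp
    also have "\<dots> = ftop (Fo R)" using finf_top[OF frameR ftop_in[OF frameR]] .
    finally show ?case .
  qed
  have "Dm n (\<lambda>a. 3 + (n - 3) \<le> a) = 0\<^sub>m n n"
    by (rule eq_matI) (use n in \<open>auto simp: Dm_def\<close>)
  hence "aS ?SD (\<phi> (Dm n (\<lambda>a. 3 + (n - 3) \<le> a))) = fbot (Fo R)"
    using h0 aS_zero[OF cS] by simp
  thus ?thesis using step[of "n - 3"] n by simp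
qed

end
end


theorem mainTheorem11:
  fixes Fo :: "'a ring \<Rightarrow> 'b frame_str"
    and Fm :: "'a ring \<Rightarrow> 'a ring \<Rightarrow> ('a \<Rightarrow> 'a) \<Rightarrow> 'b \<Rightarrow> 'b"
  assumes "ring_loc_functor Fo Fm"
    and "restricts_to_pierce Fo Fm"
  shows "(\<forall>R. ring R \<and> kochen_specker R \<longrightarrow> trivial_frame (Fo R))
       \<and> (\<forall>n\<ge>3. \<forall>R. ring R \<and> (\<exists>\<phi>. \<phi> \<in> ring_iso (cmat_ring n) R) \<longrightarrow> trivial_frame (Fo R))"
proof -
  obtain \<eta> :: "'a ring \<Rightarrow> 'b \<Rightarrow> 'a set" where
    iso: "\<forall>R. cring R \<longrightarrow> frame_iso (Fo R) (pierce_frame R) (\<eta> R)" and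
    nat: "\<forall>R S h. cring R \<and> cring S \<and> ring_mor R S h \<longrightarrow>
          (\<forall>x\<in>fcarrier (Fo R). \<eta> S (Fm R S h x) = pierce_map R S h (\<eta> R x))"
    using assms(2) unfolding restricts_to_pierce_def by blast
  have triv: "trivial_frame (Fo R)"
    if R: "ring R" and phi: "\<phi> \<in> Ring.ring_hom (cmat_ring n) R" and n: "3 \<le> n" for R \<phi> n
  proof -
    have "KSL Fo Fm \<eta> R" unfolding KSL_def using assms(1) iso nat R by blast
    then interpret KSL Fo Fm \<eta> R .
    show ?thesis unfolding trivial_frame_def by (rule collapse[OF phi n])
  qed
  show ?thesis
  proof (intro conjI allI impI)
    fix R :: "'a ring" assume h: "ring R \<and> kochen_specker R"
    then obtain n \<phi> where "3 \<le> n" "\<phi> \<in> Ring.ring_hom (cmat_ring n) R" unfolding kochen_specker_def by blast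
    thus "trivial_frame (Fo R)" using triv h by blast
  next
    fix n :: nat and R :: "'a ring" assume n: "3 \<le> n" and h: "ring R \<and> (\<exists>\<phi>. \<phi> \<in> ring_iso (cmat_ring n) R)"
    then obtain \<phi> where "\<phi> \<in> ring_iso (cmat_ring n) R" by blast
    hence "\<phi> \<in> Ring.ring_hom (cmat_ring n) R" unfolding ring_iso_def by blast
    thus "trivial_frame (Fo R)" using triv h n by blast
  qed
qed

end
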